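(* Let $\rho=\sum_{i=1}^4 p_i|\psi_i\rangle\langle\psi_i|$ be a Bell decomposable state with $p_4>\tfrac12$. Then the separable part $\rho_s=\sum_i p_i'|\psi_i\rangle\langle\psi_i|$, $p_i'=\frac{p_i}{2(1-p_4)}$ ($i=1,2,3$), $p_4'=\tfrac12$, of the optimal Lewenstein–Sanpera decomposition of $\rho$ coincides with a separable state $\sigma$ minimizing the von Neumann relative entropy $S(\rho\|\sigma)=\mathrm{tr}\{\rho(\ln\rho-\ln\sigma)\}$ over all separable two-qubit states $\sigma$. *)

theory Defs
  imports Complex_Main "HOL-Library.Extended_Real" "Jordan_Normal_Form.Matrix"
begin

definition adj :: "complex mat \<Rightarrow> complex mat" where
  "adj A = mat (dim_col A) (dim_row A) (\<lambda>(i,j). cnj (A $$ (j,i)))"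

definition tr :: "complex mat \<Rightarrow> complex" where
  "tr A = (\<Sum>i<dim_row A. A $$ (i,i))"

definition hermitian :: "complex mat \<Rightarrow> bool" where
  "hermitian A \<longleftrightarrow> dim_row A = dim_col A \<and> adj A = A"

definition unitary :: "nat \<Rightarrow> complex mat \<Rightarrow> bool" where
  "unitary n U \<longleftrightarrow> U \<in> carrier_mat n n \<and> adj U * U = 1\<^sub>m n"

definition psd :: "nat \<Rightarrow> complex mat \<Rightarrow> bool" where
  "psd n A \<longleftrightarrow> A \<in> carrier_mat n n \<and> hermitian A \<and>
     (\<forall>v::nat \<Rightarrow> complex. 0 \<le> Re (\<Sum>i<n. \<Sum>j<n. cnj (v i) * A $$ (i,j) * v j))"

definition density :: "nat \<Rightarrow> complex mat \<Rightarrow> bool" where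
  "density n \<rho> \<longleftrightarrow> psd n \<rho> \<and> tr \<rho> = 1"

definition kron :: "complex mat \<Rightarrow> complex mat \<Rightarrow> complex mat" where
  "kron A B = mat (dim_row A * dim_row B) (dim_col A * dim_col B)
     (\<lambda>(i,j). A $$ (i div dim_row B, j div dim_col B) * B $$ (i mod dim_row B, j mod dim_col B))"

definition separable :: "complex mat \<Rightarrow> bool" where
  "separable \<sigma> \<longleftrightarrow> (\<exists>(k::nat) (q::nat \<Rightarrow> real) \<alpha> \<beta>.
     (\<forall>i<k. 0 \<le> q i \<and> density 2 (\<alpha> i) \<and> density 2 (\<beta> i)) \<and> (\<Sum>i<k. q i) = 1 \<and>
     \<sigma> = mat 4 4 (\<lambda>(a,b). \<Sum>i<k. complex_of_real (q i) * kron (\<alpha> i) (\<beta> i) $$ (a,b)))"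

definition mat_fun :: "(real \<Rightarrow> real) \<Rightarrow> complex mat \<Rightarrow> complex mat" where
  "mat_fun f A = (SOME B. \<exists>U (lam::nat \<Rightarrow> real). unitary (dim_row A) U \<and>
       A = U * mat_diag (dim_row A) (\<lambda>i. complex_of_real (lam i)) * adj U \<and>
       B = U * mat_diag (dim_row A) (\<lambda>i. complex_of_real (f (lam i))) * adj U)"

text \<open>Since ln 0 = 0 in
  Isabelle, the matrix logarithm acts as 0 on kernels, giving the usual 0 ln 0 = 0 convention.\<close>
definition rel_entropy :: "complex mat \<Rightarrow> complex mat \<Rightarrow> ereal" where
  "rel_entropy \<rho> \<sigma> =
     (if (\<forall>v \<in> carrier_vec (dim_col \<sigma>). \<sigma> *\<^sub>v v = 0\<^sub>v (dim_row \<sigma>) \<longrightarrow> \<rho> *\<^sub>v v = 0\<^sub>v (dim_row \<rho>))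
      then ereal (Re (tr (\<rho> * (mat_fun ln \<rho> - mat_fun ln \<sigma>))))
      else \<infinity>)"

text \<open>Bell states in the basis |00>,|01>,|10>,|11> (index 2a+b for |ab>):
  psi1 = (|00>+|11>)/sqrt2, psi2 = (|00>-|11>)/sqrt2, psi3 = (|01>+|10>)/sqrt2,
  psi4 = (|01>-|10>)/sqrt2.\<close>
definition bell :: "nat \<Rightarrow> nat \<Rightarrow> complex" where
  "bell k j = complex_of_real (1 / sqrt 2) *
     (if k = 1 then [1, 0, 0, 1] ! j
      else if k = 2 then [1, 0, 0, -1] ! j
      else if k = 3 then [0, 1, 1, 0] ! j
      else [0, 1, -1, 0] ! j)"

definition proj :: "(nat \<Rightarrow> complex) \<Rightarrow> complex mat" where
  "proj \<psi> = mat 4 4 (\<lambda>(i,j). \<psi> i * cnj (\<psi> j))"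

definition bell_diag :: "(nat \<Rightarrow> real) \<Rightarrow> complex mat" where
  "bell_diag p = mat 4 4 (\<lambda>(a,b). \<Sum>i\<in>{1..4}. complex_of_real (p i) * proj (bell i) $$ (a,b))"

end

theory Submission
  imports Defs "Jordan_Normal_Form.Spectral_Radius"
begin

lemma mult_entry:
  assumes A: "A \<in> carrier_mat n m" and B: "B \<in> carrier_mat m k" and "i < n" "j < k"
  shows "(A * B) $$ (i,j) = (\<Sum>l<m. A $$ (i,l) * B $$ (l,j))"
  using assms by (auto simp: scalar_prod_def lessThan_atLeast0 intro!: sum.cong)

lemma mult_vec_entry:
  assumes A: "A \<in> carrier_mat n m" and v: "v \<in> carrier_vec m" and "i < n"
  shows "(A *\<^sub>v v) $ i = (\<Sum>l<m. A $$ (i,l) * v $ l)"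
  using assms by (auto simp: scalar_prod_def lessThan_atLeast0 intro!: sum.cong)

lemma adj_carrier[simp]: "A \<in> carrier_mat n m \<Longrightarrow> adj A \<in> carrier_mat m n"
  by (auto simp: adj_def)

lemma adj_dims[simp]: "dim_row (adj A) = dim_col A" "dim_col (adj A) = dim_row A"
  by (auto simp: adj_def)

lemma adj_index[simp]: "i < dim_col A \<Longrightarrow> j < dim_row A \<Longrightarrow> adj A $$ (i,j) = cnj (A $$ (j,i))"
  by (auto simp: adj_def)

lemma adj_adj[simp]: "adj (adj A) = A"
  by (rule eq_matI) (auto simp: adj_def)

lemma adj_one[simp]: "adj (1\<^sub>m n) = 1\<^sub>m n"
  by (rule eq_matI) (auto simp: adj_def)

lemma adj_mult:
  assumes A: "A \<in> carrier_mat n m" and B: "B \<in> carrier_mat m k"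
  shows "adj (A * B) = adj B * adj A"
proof (rule eq_matI)
  fix i j assume i: "i < dim_row (adj B * adj A)" and j: "j < dim_col (adj B * adj A)"
  hence i': "i < k" and j': "j < n" using A B by auto
  have "adj (A * B) $$ (i,j) = cnj ((A * B) $$ (j,i))" using A B i' j' by simp
  also have "\<dots> = (\<Sum>l<m. cnj (A $$ (j,l)) * cnj (B $$ (l,i)))"
    using mult_entry[OF A B j' i'] by simp
  also have "\<dots> = (adj B * adj A) $$ (i,j)"
    by (subst mult_entry[OF adj_carrier[OF B] adj_carrier[OF A] i' j'])
       (use A B i' j' in \<open>auto simp: mult.commute intro!: sum.cong\<close>)
  finally show "adj (A * B) $$ (i,j) = (adj B * adj A) $$ (i,j)" .
qed (use A B in auto)

lemma unitary_right:
  assumes "unitary n U" shows "U * adj U = 1\<^sub>m n"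
proof -
  have U: "U \<in> carrier_mat n n" and UU: "adj U * U = 1\<^sub>m n" using assms unfolding unitary_def by auto
  show ?thesis using mat_mult_left_right_inverse[OF adj_carrier[OF U] U UU] .
qed

lemma unitary_one: "unitary n (1\<^sub>m n)"
  unfolding unitary_def by auto

lemma unitary_mult:
  assumes U: "unitary n U" and V: "unitary n V" shows "unitary n (U * V)"
proof -
  have Uc: "U \<in> carrier_mat n n" and UU: "adj U * U = 1\<^sub>m n" using U unfolding unitary_def by auto
  have Vc: "V \<in> carrier_mat n n" and VV: "adj V * V = 1\<^sub>m n" using V unfolding unitary_def by auto
  have "adj (U * V) * (U * V) = adj V * adj U * (U * V)"
    using Uc Vc by (simp add: adj_mult[OF Uc Vc])
  also have "\<dots> = adj V * (adj U * (U * V))"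
    by (rule assoc_mult_mat) (use Uc Vc in auto)
  also have "\<dots> = adj V * ((adj U * U) * V)"
    by (subst assoc_mult_mat[symmetric]) (use Uc Vc in auto)
  also have "\<dots> = adj V * V" using UU Vc by simp
  also have "\<dots> = 1\<^sub>m n" using VV by simp
  finally show ?thesis using Uc Vc unfolding unitary_def by auto
qed

lemma mult_unit_vec:
  assumes A: "(A :: complex mat) \<in> carrier_mat n m" and j: "j < m"
  shows "A *\<^sub>v unit_vec m j = col A j"
  by (rule eq_vecI) (use A j in auto)

lemma mult_carrier_n[simp]:
  "A \<in> carrier_mat n n \<Longrightarrow> B \<in> carrier_mat n n \<Longrightarrow> A * B \<in> carrier_mat n n"
  by (rule mult_carrier_mat)

definition offdiag0 :: "nat \<Rightarrow> nat \<Rightarrow> complex mat \<Rightarrow> bool" where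
  "offdiag0 n k B \<longleftrightarrow> (\<forall>i<n. \<forall>j<k. i \<noteq> j \<longrightarrow> B $$ (i,j) = 0)"

lemma herm_entry:
  assumes B: "B \<in> carrier_mat n n" and h: "adj B = B" and "i < n" "j < n"
  shows "B $$ (i,j) = cnj (B $$ (j,i))"
proof -
  have "adj B $$ (i,j) = cnj (B $$ (j,i))" using assms(1,3,4) by simp
  thus ?thesis using h by simp
qed

lemma eigvec_tail:
  assumes B: "B \<in> carrier_mat n n" and h: "adj B = B" and od: "offdiag0 n k B" and k: "k < n"
  shows "\<exists>v e. v \<in> carrier_vec n \<and> v \<noteq> 0\<^sub>v n \<and> (\<forall>i<k. v $ i = 0) \<and> B *\<^sub>v v = e \<cdot>\<^sub>v v"
proof -
  define C where "C = mat (n-k) (n-k) (\<lambda>(i,j). B $$ (i+k, j+k))"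
  have C: "C \<in> carrier_mat (n-k) (n-k)" by (simp add: C_def)
  from spectrum_non_empty[OF C] k obtain e where "eigenvalue C e" unfolding spectrum_def by auto
  then obtain w where w: "w \<in> carrier_vec (n-k)" "w \<noteq> 0\<^sub>v (n-k)" "C *\<^sub>v w = e \<cdot>\<^sub>v w"
    unfolding eigenvalue_def eigenvector_def using C by auto
  define v where "v = vec n (\<lambda>i. if i < k then 0 else w $ (i-k))"
  have v: "v \<in> carrier_vec n" by (simp add: v_def)
  have vnz: "v \<noteq> 0\<^sub>v n"
  proof
    assume v0: "v = 0\<^sub>v n"
    have "w = 0\<^sub>v (n-k)"
    proof (rule eq_vecI)
      fix i assume "i < dim_vec (0\<^sub>v (n - k) :: complex vec)"
      hence i: "i < n - k" by simp
      have "v $ (i+k) = 0" using v0 i by simp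
      thus "w $ i = 0\<^sub>v (n - k) $ i" using i by (simp add: v_def)
    qed (use w in auto)
    with w show False by simp
  qed
  have Bv: "B *\<^sub>v v = e \<cdot>\<^sub>v v"
  proof (rule eq_vecI)
    fix i assume "i < dim_vec (e \<cdot>\<^sub>v v)"
    hence i: "i < n" by (simp add: v_def)
    have split: "{..<n} = {..<k} \<union> {k..<n}" using k by auto
    have "(B *\<^sub>v v) $ i = (\<Sum>j<n. B $$ (i,j) * v $ j)" using mult_vec_entry[OF B v i] .
    also have "\<dots> = (\<Sum>j\<in>{k..<n}. B $$ (i,j) * v $ j)"
    proof -
      have "(\<Sum>j<k. B $$ (i,j) * v $ j) = 0" using k by (auto intro!: sum.neutral simp: v_def)
      thus ?thesis unfolding split by (subst sum.union_disjoint) auto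
    qed
    also have "\<dots> = (\<Sum>j\<in>{k..<n}. B $$ (i,j) * w $ (j-k))"
      by (rule sum.cong) (auto simp: v_def)
    also have "\<dots> = (e \<cdot>\<^sub>v v) $ i"
    proof (cases "i < k")
      case True
      have "B $$ (i,j) = 0" if "j \<in> {k..<n}" for j
      proof -
        have "B $$ (i,j) = cnj (B $$ (j,i))" using herm_entry[OF B h i] that by auto
        also have "B $$ (j,i) = 0" using od that True unfolding offdiag0_def by auto
        finally show ?thesis by simp
      qed
      thus ?thesis using True i by (simp add: v_def)
    next
      case False
      have img: "{k..<n} = (\<lambda>j. j + k) ` {..<n-k}"
      proof
        show "{k..<n} \<subseteq> (\<lambda>j. j + k) ` {..<n-k}"
        proof
          fix x assume "x \<in> {k..<n}" thus "x \<in> (\<lambda>j. j+k) ` {..<n-k}"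
            by (intro image_eqI[of _ _ "x-k"]) auto
        qed
      qed auto
      have "(\<Sum>j\<in>{k..<n}. B $$ (i,j) * w $ (j-k)) = (\<Sum>j<n-k. B $$ (i,j+k) * w $ j)"
        unfolding img by (subst sum.reindex) (auto simp: inj_on_def)
      also have "\<dots> = (C *\<^sub>v w) $ (i-k)"
        using mult_vec_entry[OF C w(1), of "i-k"] False i by (simp add: C_def)
      also have "\<dots> = e * w $ (i-k)" using w(3) w(1) False i by simp
      finally show ?thesis using False i by (simp add: v_def)
    qed
    finally show "(B *\<^sub>v v) $ i = (e \<cdot>\<^sub>v v) $ i" .
  qed (use B in \<open>auto simp: v_def\<close>)
  show ?thesis using v vnz Bv k by (intro exI[of _ v] exI[of _ e]) (auto simp: v_def)
qed

lemma householder: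
  assumes y: "y \<in> carrier_vec n" and k: "k < n" and y0: "\<forall>i<k. y $ i = 0"
    and yk: "y $ k = complex_of_real r" and yn: "(\<Sum>i<n. (cmod (y $ i))\<^sup>2) = 1"
  shows "\<exists>H. H \<in> carrier_mat n n \<and> adj H = H \<and> H * H = 1\<^sub>m n \<and> col H k = y \<and>
     (\<forall>j<k. col H j = unit_vec n j)"
proof -
  define w where "w = (\<lambda>i. (if i = k then 1 else 0) - y $ i)"
  define c :: real where "c = (if r = 1 then 0 else 1 / (1 - r))"
  define H where "H = mat n n (\<lambda>(i,j). (if i = j then 1 else 0) - complex_of_real c * w i * cnj (w j))"
  have Hc: "H \<in> carrier_mat n n" by (simp add: H_def)
  have nsq: "y $ i * cnj (y $ i) = complex_of_real ((cmod (y $ i))\<^sup>2)" for i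
    by (rule complex_norm_square[symmetric])
  have s: "(\<Sum>l<n. cnj (w l) * w l) = complex_of_real (2 - 2 * r)"
  proof -
    have "(\<Sum>l<n. cnj (w l) * w l) = (\<Sum>l<n. (if l = k then 1 - cnj (y $ l) - y $ l else 0)
        + y $ l * cnj (y $ l))"
      by (rule sum.cong) (auto simp: w_def algebra_simps)
    also have "\<dots> = (1 - cnj (y $ k) - y $ k) + (\<Sum>l<n. y $ l * cnj (y $ l))"
      using k by (simp add: sum.distrib)
    also have "(\<Sum>l<n. y $ l * cnj (y $ l)) = (\<Sum>l<n. complex_of_real ((cmod (y $ l))\<^sup>2))"
      by (rule sum.cong[OF refl nsq])
    also have "\<dots> = complex_of_real (\<Sum>l<n. (cmod (y $ l))\<^sup>2)"
      by (rule of_real_sum[symmetric])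
    also have "(1 - cnj (y $ k) - y $ k) + complex_of_real (\<Sum>l<n. (cmod (y $ l))\<^sup>2) = complex_of_real (2 - 2 * r)"
      using yk yn by simp
    finally show ?thesis .
  qed
  have csr: "c * c * (2 - 2 * r) = 2 * c"
  proof (cases "r = 1")
    case False
    hence h1: "c * (1 - r) = 1" by (simp add: c_def)
    have "c * c * (2 - 2 * r) = 2 * c * (c * (1 - r))" by (simp add: algebra_simps)
    thus ?thesis using h1 by simp
  qed (simp add: c_def)
  have cs: "complex_of_real c * complex_of_real c * complex_of_real (2 - 2 * r) = 2 * complex_of_real c"
    using arg_cong[OF csr, of complex_of_real] by simp
  have herm: "adj H = H"
    by (rule eq_matI) (auto simp: H_def adj_def)
  have HH: "H * H = 1\<^sub>m n"
  proof (rule eq_matI)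
    fix i j assume "i < dim_row (1\<^sub>m n :: complex mat)" "j < dim_col (1\<^sub>m n :: complex mat)"
    hence i: "i < n" and j: "j < n" by auto
    let ?d = "\<lambda>i j. (if i = j then 1 else 0) :: complex"
    let ?c = "complex_of_real c"
    have "(H * H) $$ (i,j) = (\<Sum>l<n. (?d i l - ?c * w i * cnj (w l)) * (?d l j - ?c * w l * cnj (w j)))"
      using mult_entry[OF Hc Hc i j] i j by (simp add: H_def)
    also have "\<dots> = (\<Sum>l<n. (if l = i then ?d i j else 0) - (if l = j then ?c * w i * cnj (w l) else 0)
       - (if l = i then ?c * w l * cnj (w j) else 0)
       + (?c * ?c * w i * cnj (w j)) * (cnj (w l) * w l))"
    proof (rule sum.cong[OF refl])
      fix l
      show "(?d i l - ?c * w i * cnj (w l)) * (?d l j - ?c * w l * cnj (w j)) =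
        (if l = i then ?d i j else 0) - (if l = j then ?c * w i * cnj (w l) else 0)
       - (if l = i then ?c * w l * cnj (w j) else 0)
       + (?c * ?c * w i * cnj (w j)) * (cnj (w l) * w l)"
        by (cases "l = i"; cases "l = j"; simp add: ring_distribs)
    qed
    also have "\<dots> = ?d i j - ?c * w i * cnj (w j) - ?c * w i * cnj (w j)
       + (\<Sum>l<n. (?c * ?c * w i * cnj (w j)) * (cnj (w l) * w l))"
      using i j by (simp add: sum.distrib sum_subtractf)
    also have "(\<Sum>l<n. (?c * ?c * w i * cnj (w j)) * (cnj (w l) * w l))
       = (?c * ?c * w i * cnj (w j)) * (\<Sum>l<n. cnj (w l) * w l)"
      by (simp only: sum_distrib_left)
    also have "\<dots> = (?c * ?c * complex_of_real (2 - 2 * r)) * (w i * cnj (w j))"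
      unfolding s by (simp only: mult_ac)
    also have "\<dots> = 2 * (?c * w i * cnj (w j))"
      unfolding cs by (simp only: mult_ac)
    also have "?d i j - ?c * w i * cnj (w j) - ?c * w i * cnj (w j) + 2 * (?c * w i * cnj (w j)) = ?d i j"
      by simp
    finally show "(H * H) $$ (i,j) = 1\<^sub>m n $$ (i,j)" using i j by simp
  qed (use Hc in auto)
  have colk: "col H k = y"
  proof (rule eq_vecI)
    fix i assume "i < dim_vec y" hence i: "i < n" using y by simp
    show "col H k $ i = y $ i"
    proof (cases "r = 1")
      case True
      have "(\<Sum>l\<in>{..<n}-{k}. (cmod (y $ l))\<^sup>2) = 0"
        using yn yk True k by (simp add: sum_diff1)
      hence "\<forall>l\<in>{..<n}-{k}. (cmod (y $ l))\<^sup>2 = 0"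
        by (subst sum_nonneg_eq_0_iff[symmetric]) auto
      hence "y $ i = (if i = k then 1 else 0)" using i yk True by auto
      thus ?thesis using True i k by (simp add: H_def c_def)
    next
      case False
      have wk: "cnj (w k) = complex_of_real (1 - r)" using yk by (simp add: w_def)
      have "c * (1 - r) = 1" using False by (simp add: c_def)
      hence "complex_of_real c * cnj (w k) = 1" unfolding wk by (metis of_real_1 of_real_mult)
      hence cw: "complex_of_real c * cnj (w k) = 1" .
      have e1: "complex_of_real c * w i * cnj (w k) = w i"
      proof -
        have "complex_of_real c * w i * cnj (w k) = w i * (complex_of_real c * cnj (w k))"
          by (simp only: mult_ac)
        thus ?thesis using cw by simp
      qed
      have "col H k $ i = (if i = k then 1 else 0) - w i" using i k e1 by (simp add: H_def)
      thus ?thesis by (simp add: w_def)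
    qed
  qed (use Hc y in auto)
  have colj: "col H j = unit_vec n j" if j: "j < k" for j
  proof (rule eq_vecI)
    fix i assume "i < dim_vec (unit_vec n j)" hence i: "i < n" by simp
    have "w j = 0" using j y0 by (simp add: w_def)
    thus "col H j $ i = unit_vec n j $ i" using i j k by (simp add: H_def)
  qed (use Hc in auto)
  show ?thesis using Hc herm HH colk colj by blast
qed

lemma normalize_vec:
  assumes v: "v \<in> carrier_vec n" and vnz: "v \<noteq> 0\<^sub>v n" and k: "k < n"
  shows "\<exists>a r. (a \<cdot>\<^sub>v v) $ k = complex_of_real r \<and> (\<Sum>i<n. (cmod ((a \<cdot>\<^sub>v v) $ i))\<^sup>2) = 1"
proof -
  define N where "N = (\<Sum>i<n. (cmod (v $ i))\<^sup>2)"
  obtain i0 where i0: "i0 < n" "v $ i0 \<noteq> 0"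
    using vnz v by (metis eq_vecI carrier_vecD index_zero_vec(1) index_zero_vec(2))
  have "0 < (cmod (v $ i0))\<^sup>2" using i0 by simp
  also have "\<dots> \<le> N" unfolding N_def using i0 by (intro member_le_sum) auto
  finally have N: "N > 0" .
  define ph where "ph = (if v $ k = 0 then 1 else cnj (v $ k) / complex_of_real (cmod (v $ k)))"
  have ph1: "cmod ph = 1" by (auto simp: ph_def norm_divide)
  define a where "a = ph / complex_of_real (sqrt N)"
  have ca: "cmod a = 1 / sqrt N" using N by (simp add: a_def norm_divide ph1)
  have "(a \<cdot>\<^sub>v v) $ k = complex_of_real (cmod (v $ k) / sqrt N)"
  proof (cases "v $ k = 0")
    case True thus ?thesis using v k by (simp add: a_def ph_def)
  next
    case False
    have "cnj (v $ k) * v $ k = complex_of_real ((cmod (v $ k))\<^sup>2)"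
      by (subst mult.commute) (rule complex_norm_square[symmetric])
    thus ?thesis using v k False
      by (simp add: a_def ph_def field_simps power2_eq_square)
  qed
  moreover have "(\<Sum>i<n. (cmod ((a \<cdot>\<^sub>v v) $ i))\<^sup>2) = 1"
  proof -
    have "(\<Sum>i<n. (cmod ((a \<cdot>\<^sub>v v) $ i))\<^sup>2) = (\<Sum>i<n. (1 / N) * (cmod (v $ i))\<^sup>2)"
      using v N by (intro sum.cong) (auto simp: norm_mult ca power_mult_distrib power_divide)
    also have "\<dots> = 1" using N by (simp add: sum_divide_distrib[symmetric] N_def[symmetric])
    finally show ?thesis .
  qed
  ultimately show ?thesis by blast
qed

lemma spectral_step:
  assumes B: "B \<in> carrier_mat n n" and h: "adj B = B" and od: "offdiag0 n k B" and k: "k < n"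
  shows "\<exists>H. unitary n H \<and> offdiag0 n (Suc k) (adj H * B * H)"
proof -
  obtain v e where v: "v \<in> carrier_vec n" "v \<noteq> 0\<^sub>v n" "\<forall>i<k. v $ i = 0" "B *\<^sub>v v = e \<cdot>\<^sub>v v"
    using eigvec_tail[OF B h od k] by blast
  obtain a r where ar: "(a \<cdot>\<^sub>v v) $ k = complex_of_real r" "(\<Sum>i<n. (cmod ((a \<cdot>\<^sub>v v) $ i))\<^sup>2) = 1"
    using normalize_vec[OF v(1) v(2) k] by blast
  define y where "y = a \<cdot>\<^sub>v v"
  have y: "y \<in> carrier_vec n" using v by (simp add: y_def)
  have y0: "\<forall>i<k. y $ i = 0" using v k by (simp add: y_def)
  have By: "B *\<^sub>v y = e \<cdot>\<^sub>v y"
    unfolding y_def using B v by (simp add: mult_mat_vec smult_smult_assoc mult.commute)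
  obtain H where H: "H \<in> carrier_mat n n" "adj H = H" "H * H = 1\<^sub>m n" "col H k = y"
     "\<forall>j<k. col H j = unit_vec n j"
    using householder[OF y k y0 ar[folded y_def]] by blast
  have U: "unitary n H" using H unfolding unitary_def by simp
  have "offdiag0 n (Suc k) (H * B * H)"
    unfolding offdiag0_def
  proof (intro allI impI)
    fix i j assume i: "i < n" and j: "j < Suc k" and ij: "i \<noteq> j"
    have jn: "j < n" using j k by simp
    have "(H * B * H) $$ (i,j) = col (H * B * H) j $ i" using i jn H(1) B by simp
    also have "col (H * B * H) j = (H * B) *\<^sub>v col H j"
      using col_mult2[OF _ H(1) jn, of "H * B" n] H B by (meson mult_carrier_mat)
    also have "\<dots> = H *\<^sub>v (B *\<^sub>v col H j)"
      using H(1) B jn by simp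
    finally have eq: "(H * B * H) $$ (i,j) = (H *\<^sub>v (B *\<^sub>v col H j)) $ i" .
    show "(H * B * H) $$ (i,j) = 0"
    proof (cases "j < k")
      case True
      have "B *\<^sub>v col H j = B $$ (j,j) \<cdot>\<^sub>v unit_vec n j"
      proof (rule eq_vecI)
        fix l assume "l < dim_vec (B $$ (j,j) \<cdot>\<^sub>v unit_vec n j)" hence l: "l < n" by simp
        have cj: "col H j = unit_vec n j" using H(5) True by simp
        have "(B *\<^sub>v col H j) $ l = B $$ (l,j)"
          unfolding cj using B l jn mult_unit_vec[OF B jn] by simp
        thus "(B *\<^sub>v col H j) $ l = (B $$ (j,j) \<cdot>\<^sub>v unit_vec n j) $ l"
          using od True l jn unfolding offdiag0_def by auto
      qed (use B H in auto)
      hence "H *\<^sub>v (B *\<^sub>v col H j) = B $$ (j,j) \<cdot>\<^sub>v unit_vec n j"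
        using H(1) H(5) True jn by (simp add: mult_mat_vec mult_unit_vec)
      thus ?thesis using eq i ij jn by simp
    next
      case False
      hence jk: "j = k" using j by simp
      have "H *\<^sub>v (B *\<^sub>v col H j) = e \<cdot>\<^sub>v (H *\<^sub>v y)"
        using H(1) H(4) By jk y by (simp add: mult_mat_vec)
      also have "H *\<^sub>v y = (H * H) *\<^sub>v unit_vec n k"
      proof -
        have "y = H *\<^sub>v unit_vec n k" using mult_unit_vec[OF H(1) k] H(4) by simp
        thus ?thesis using H(1) by simp
      qed
      also have "\<dots> = unit_vec n k" using H(3) by simp
      finally show ?thesis using eq i ij jk k by simp
    qed
  qed
  thus ?thesis using U H by auto
qed

lemma spectral_upto:
  assumes A: "A \<in> carrier_mat n n" and h: "adj A = A"
  shows "k \<le> n \<Longrightarrow> \<exists>U. unitary n U \<and> offdiag0 n k (adj U * A * U)"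
proof (induction k)
  case 0
  show ?case using unitary_one by (auto simp: offdiag0_def)
next
  case (Suc k)
  then obtain U where U: "unitary n U" "offdiag0 n k (adj U * A * U)" by auto
  have Uc: "U \<in> carrier_mat n n" using U unfolding unitary_def by auto
  define B where "B = adj U * A * U"
  have Bc: "B \<in> carrier_mat n n" using Uc A unfolding B_def by (meson adj_carrier mult_carrier_mat)
  have hB: "adj B = B"
    unfolding B_def using Uc A h
    by (simp add: adj_mult[of _ n n _ n] assoc_mult_mat[of _ n n _ n _ n])
  obtain H where H: "unitary n H" "offdiag0 n (Suc k) (adj H * B * H)"
    using spectral_step[OF Bc hB U(2)[folded B_def]] Suc by auto
  have Hc: "H \<in> carrier_mat n n" using H unfolding unitary_def by auto
  have "adj (U * H) * A * (U * H) = adj H * B * H"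
    unfolding B_def using Uc Hc A
    by (simp add: adj_mult[of _ n n _ n] assoc_mult_mat[of _ n n _ n _ n])
  thus ?case using H unitary_mult[OF U(1) H(1)] by metis
qed

lemma spectral:
  assumes "hermitian A"
  shows "\<exists>U lam. unitary (dim_row A) U \<and>
     A = U * mat_diag (dim_row A) (\<lambda>i. complex_of_real (lam i)) * adj U"
proof -
  define n where "n = dim_row A"
  have A: "A \<in> carrier_mat n n" and h: "adj A = A"
    using assms unfolding hermitian_def n_def by auto
  obtain U where U: "unitary n U" "offdiag0 n n (adj U * A * U)"
    using spectral_upto[OF A h] by auto
  have Uc: "U \<in> carrier_mat n n" using U unfolding unitary_def by auto
  define B where "B = adj U * A * U"
  have Bc: "B \<in> carrier_mat n n" using Uc A unfolding B_def by (meson adj_carrier mult_carrier_mat)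
  have hB: "adj B = B"
    unfolding B_def using Uc A h
    by (simp add: adj_mult[of _ n n _ n] assoc_mult_mat[of _ n n _ n _ n])
  define lam where "lam = (\<lambda>i. Re (B $$ (i,i)))"
  have real: "B $$ (i,i) = complex_of_real (lam i)" if "i < n" for i
  proof -
    have "cnj (B $$ (i,i)) = B $$ (i,i)" using herm_entry[OF Bc hB that that] by simp
    hence "B $$ (i,i) \<in> \<real>" using Reals_cnj_iff by blast
    thus ?thesis unfolding lam_def by (metis Reals_cases Re_complex_of_real)
  qed
  have BD: "B = mat_diag n (\<lambda>i. complex_of_real (lam i))"
    by (rule eq_matI) (use Bc U(2) real in \<open>auto simp: mat_diag_def offdiag0_def B_def\<close>)
  have UU: "U * adj U = 1\<^sub>m n" using unitary_right[OF U(1)] .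
  have "U * B * adj U = (U * adj U) * A * (U * adj U)"
    unfolding B_def using Uc A by (simp add: assoc_mult_mat[of _ n n _ n _ n])
  also have "\<dots> = A" using UU A by simp
  finally show ?thesis using U(1) BD unfolding n_def by metis
qed

definition cip :: "nat \<Rightarrow> complex vec \<Rightarrow> complex vec \<Rightarrow> complex" where
  "cip n x y = (\<Sum>a<n. cnj (x $ a) * y $ a)"

lemma adj_mult_vec_carrier[simp]:
  "U \<in> carrier_mat n m \<Longrightarrow> x \<in> carrier_vec n \<Longrightarrow> adj U *\<^sub>v x \<in> carrier_vec m"
  by (meson adj_carrier mult_mat_vec_carrier)

lemma mat_diag_dims[simp]: "dim_row (mat_diag n f) = n" "dim_col (mat_diag n f) = n"
  by (auto simp: mat_diag_def)

lemma mat_diag_mult_vec_carrier[simp]: "w \<in> carrier_vec n \<Longrightarrow> mat_diag n g *\<^sub>v w \<in> carrier_vec n"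
  by (meson mat_diag_dim mult_mat_vec_carrier)

lemma mat_diag_mult_vec_index:
  assumes w: "w \<in> carrier_vec n" and j: "j < n"
  shows "(mat_diag n g *\<^sub>v w) $ j = g j * w $ j"
proof -
  have "(mat_diag n g *\<^sub>v w) $ j = (\<Sum>l<n. mat_diag n g $$ (j,l) * w $ l)"
    using mult_vec_entry[OF mat_diag_dim w j] .
  also have "\<dots> = (\<Sum>l<n. if l = j then g j * w $ j else 0)"
    by (rule sum.cong[OF refl]) (use j in \<open>auto simp: mat_diag_def\<close>)
  also have "\<dots> = g j * w $ j" using j by simp
  finally show ?thesis .
qed

lemma mv_assoc: "A \<in> carrier_mat n n \<Longrightarrow> B \<in> carrier_mat n n \<Longrightarrow> v \<in> carrier_vec n \<Longrightarrow>
  (A * B) *\<^sub>v v = A *\<^sub>v (B *\<^sub>v v)"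
  by (rule assoc_mult_mat_vec)

lemma mm_assoc: "A \<in> carrier_mat n n \<Longrightarrow> B \<in> carrier_mat n n \<Longrightarrow> C \<in> carrier_mat n n \<Longrightarrow>
  A * B * C = A * (B * C)"
  by (rule assoc_mult_mat)

lemma cip_adj:
  assumes A: "A \<in> carrier_mat n m" and x: "x \<in> carrier_vec n" and z: "z \<in> carrier_vec m"
  shows "cip n x (A *\<^sub>v z) = cip m (adj A *\<^sub>v x) z"
proof -
  have "cip n x (A *\<^sub>v z) = (\<Sum>a<n. \<Sum>b<m. cnj (x $ a) * (A $$ (a,b) * z $ b))"
    unfolding cip_def by (rule sum.cong[OF refl]) (use A z in \<open>simp add: mult_vec_entry[OF A z] sum_distrib_left del: index_mult_mat_vec\<close>)
  also have "\<dots> = (\<Sum>b<m. \<Sum>a<n. cnj (x $ a) * (A $$ (a,b) * z $ b))"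
    by (rule sum.swap)
  also have "\<dots> = cip m (adj A *\<^sub>v x) z"
    unfolding cip_def
  proof (rule sum.cong[OF refl])
    fix b assume b: "b \<in> {..<m}"
    have "(adj A *\<^sub>v x) $ b = (\<Sum>a<n. cnj (A $$ (a,b)) * x $ a)"
      using mult_vec_entry[OF adj_carrier[OF A] x, of b] b A by simp
    thus "(\<Sum>a<n. cnj (x $ a) * (A $$ (a,b) * z $ b)) = cnj ((adj A *\<^sub>v x) $ b) * z $ b"
      by (simp add: sum_distrib_left sum_distrib_right mult_ac)
  qed
  finally show ?thesis .
qed

lemma cip_unitary:
  assumes U: "unitary n U" and x: "x \<in> carrier_vec n"
  shows "cip n (adj U *\<^sub>v x) (adj U *\<^sub>v x) = cip n x x"
proof -
  have Uc: "U \<in> carrier_mat n n" using U unfolding unitary_def by auto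
  have "cip n x (U *\<^sub>v (adj U *\<^sub>v x)) = cip n (adj U *\<^sub>v x) (adj U *\<^sub>v x)"
    by (rule cip_adj[OF Uc x]) (use Uc x in simp)
  hence "cip n (adj U *\<^sub>v x) (adj U *\<^sub>v x) = cip n x (U *\<^sub>v (adj U *\<^sub>v x))" by simp
  also have "U *\<^sub>v (adj U *\<^sub>v x) = (U * adj U) *\<^sub>v x" using Uc x by (simp add: mv_assoc[where n=n])
  also have "\<dots> = x" using unitary_right[OF U] x by simp
  finally show ?thesis .
qed

lemma cip_diag:
  assumes U: "U \<in> carrier_mat n n" and x: "x \<in> carrier_vec n"
  shows "cip n x ((U * mat_diag n g * adj U) *\<^sub>v x) =
    (\<Sum>j<n. g j * (cnj ((adj U *\<^sub>v x) $ j) * (adj U *\<^sub>v x) $ j))"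
proof -
  define w where "w = adj U *\<^sub>v x"
  have w: "w \<in> carrier_vec n" using U x by (simp add: w_def)
  have "(U * mat_diag n g * adj U) *\<^sub>v x = U *\<^sub>v (mat_diag n g *\<^sub>v w)"
    using U x by (simp add: w_def mv_assoc[where n=n])
  hence "cip n x ((U * mat_diag n g * adj U) *\<^sub>v x) = cip n w (mat_diag n g *\<^sub>v w)"
    using cip_adj[OF U x, of "mat_diag n g *\<^sub>v w"] w by (simp add: w_def)
  also have "\<dots> = (\<Sum>j<n. g j * (cnj (w $ j) * w $ j))"
    unfolding cip_def
  proof (rule sum.cong[OF refl])
    fix j assume j: "j \<in> {..<n}"
    have "(mat_diag n g *\<^sub>v w) $ j = g j * w $ j"
      using mat_diag_mult_vec_index[OF w] j by simp
    thus "cnj (w $ j) * (mat_diag n g *\<^sub>v w) $ j = g j * (cnj (w $ j) * w $ j)" by simp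
  qed
  finally show ?thesis unfolding w_def .
qed

lemma cip_eigen:
  assumes U: "unitary n U" and S: "S = U * mat_diag n (\<lambda>i. complex_of_real (lam i)) * adj U"
    and x: "x \<in> carrier_vec n" and ev: "S *\<^sub>v x = complex_of_real mu \<cdot>\<^sub>v x" and nx: "cip n x x = 1"
  shows "cip n x ((U * mat_diag n (\<lambda>i. complex_of_real (f (lam i))) * adj U) *\<^sub>v x) = complex_of_real (f mu)"
proof -
  have Uc: "U \<in> carrier_mat n n" using U unfolding unitary_def by auto
  have UU: "adj U * U = 1\<^sub>m n" using U unfolding unitary_def by auto
  define w where "w = adj U *\<^sub>v x"
  have w: "w \<in> carrier_vec n" using Uc x by (simp add: w_def)
  let ?D = "mat_diag n (\<lambda>i. complex_of_real (lam i))"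
  have "adj U * S = (adj U * U) * ?D * adj U"
    using Uc by (simp add: S mm_assoc[where n=n])
  also have "\<dots> = ?D * adj U" using UU Uc by simp
  finally have US: "adj U * S = ?D * adj U" .
  have "adj U *\<^sub>v (S *\<^sub>v x) = ?D *\<^sub>v w"
  proof -
    have Sc: "S \<in> carrier_mat n n" using Uc S by simp
    have "adj U *\<^sub>v (S *\<^sub>v x) = (adj U * S) *\<^sub>v x" using Uc Sc x by (simp add: mv_assoc[where n=n])
    also have "\<dots> = ?D *\<^sub>v w" unfolding US w_def by (rule assoc_mult_mat_vec) (use Uc x in auto)
    finally show ?thesis .
  qed
  hence eq: "complex_of_real mu \<cdot>\<^sub>v w = ?D *\<^sub>v w" using ev Uc x mult_mat_vec[OF adj_carrier[OF Uc] x] by (simp add: w_def)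
  have comp: "complex_of_real (lam j) * w $ j = complex_of_real mu * w $ j" if j: "j < n" for j
  proof -
    have "(?D *\<^sub>v w) $ j = complex_of_real (lam j) * w $ j"
      using mat_diag_mult_vec_index[OF w j] .
    moreover have "(complex_of_real mu \<cdot>\<^sub>v w) $ j = complex_of_real mu * w $ j" using w j by simp
    ultimately show ?thesis using eq by simp
  qed
  have "cip n x ((U * mat_diag n (\<lambda>i. complex_of_real (f (lam i))) * adj U) *\<^sub>v x) =
     (\<Sum>j<n. complex_of_real (f (lam j)) * (cnj (w $ j) * w $ j))"
    using cip_diag[OF Uc x] unfolding w_def .
  also have "\<dots> = (\<Sum>j<n. complex_of_real (f mu) * (cnj (w $ j) * w $ j))"
  proof (rule sum.cong[OF refl])
    fix j assume "j \<in> {..<n}"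
    hence "w $ j = 0 \<or> lam j = mu" using comp[of j] by auto
    thus "complex_of_real (f (lam j)) * (cnj (w $ j) * w $ j) = complex_of_real (f mu) * (cnj (w $ j) * w $ j)"
      by auto
  qed
  also have "\<dots> = complex_of_real (f mu) * cip n w w"
    by (simp add: cip_def sum_distrib_left)
  also have "cip n w w = 1" using cip_unitary[OF U x] nx by (simp add: w_def)
  finally show ?thesis by simp
qed

lemma lt4: "(a::nat) < 4 \<longleftrightarrow> a = 0 \<or> a = 1 \<or> a = 2 \<or> a = 3" by auto
lemma lessThan4: "{..<4::nat} = {0,1,2,3}" by auto
lemma oneto4: "{1..4::nat} = {1,2,3,4}" by auto

definition s2 :: complex where "s2 = complex_of_real (1 / sqrt 2)"
lemma s2_sq: "s2 * s2 = 1/2"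
  unfolding s2_def by (simp flip: of_real_mult)
lemma cnj_s2[simp]: "cnj s2 = s2" unfolding s2_def by simp

lemma bell_vals:
  "bell (1) (0) = s2"
  "bell (Suc 0) (0) = s2"
  "bell (1) (1) = 0"
  "bell (1) (Suc 0) = 0"
  "bell (Suc 0) (1) = 0"
  "bell (Suc 0) (Suc 0) = 0"
  "bell (1) (2) = 0"
  "bell (Suc 0) (2) = 0"
  "bell (1) (3) = s2"
  "bell (Suc 0) (3) = s2"
  "bell (2) (0) = s2"
  "bell (2) (1) = 0"
  "bell (2) (Suc 0) = 0"
  "bell (2) (2) = 0"
  "bell (2) (3) = - s2"
  "bell (3) (0) = 0"
  "bell (3) (1) = s2"
  "bell (3) (Suc 0) = s2"
  "bell (3) (2) = s2"
  "bell (3) (3) = 0"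
  "bell (4) (0) = 0"
  "bell (4) (1) = s2"
  "bell (4) (Suc 0) = s2"
  "bell (4) (2) = - s2"
  "bell (4) (3) = 0"
  by (simp_all add: bell_def s2_def numeral_eq_Suc)

lemma bell_real: "a < 4 \<Longrightarrow> cnj (bell k a) = bell k a"
  unfolding bell_def lt4 by (auto simp: nth_Cons')

lemma bell_orth:
  assumes "k \<in> {1..4}" "l \<in> {1..4}"
  shows "(\<Sum>a<4. cnj (bell k a) * bell l a) = (if k = l then 1 else 0)"
  using assms unfolding lessThan4 oneto4
  by (auto simp: bell_vals s2_sq)

lemma bell_compl:
  assumes "a < 4" "b < 4"
  shows "(\<Sum>k\<in>{1..4}. bell k a * cnj (bell k b)) = (if a = b then 1 else 0)"
  using assms unfolding lt4 oneto4
  by (auto simp: bell_vals s2_sq)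

definition bv :: "nat \<Rightarrow> complex vec" where "bv i = vec 4 (bell i)"

lemma bv_carrier[simp]: "bv i \<in> carrier_vec 4" by (simp add: bv_def)
lemma bv_dim[simp]: "dim_vec (bv i) = 4" by (simp add: bv_def)
lemma bv_index[simp]: "a < 4 \<Longrightarrow> bv i $ a = bell i a" by (simp add: bv_def)

lemma cip_bv: "v \<in> carrier_vec 4 \<Longrightarrow> cip 4 (bv i) v = (\<Sum>b<4. bell i b * v $ b)"
  unfolding cip_def by (rule sum.cong) (auto simp: bell_real)

lemma cip_bv_bv: "k \<in> {1..4} \<Longrightarrow> l \<in> {1..4} \<Longrightarrow> cip 4 (bv k) (bv l) = (if k = l then 1 else 0)"
  unfolding cip_def using bell_orth[of k l] by (simp add: bell_real)

lemma bd_carrier[simp]: "bell_diag p \<in> carrier_mat 4 4"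
  by (simp add: bell_diag_def)
lemma bd_dims[simp]: "dim_row (bell_diag p) = 4" "dim_col (bell_diag p) = 4"
  by (simp_all add: bell_diag_def)

lemma bd_entry: "a < 4 \<Longrightarrow> b < 4 \<Longrightarrow>
  bell_diag p $$ (a,b) = (\<Sum>i\<in>{1..4}. complex_of_real (p i) * (bell i a * bell i b))"
  by (simp add: bell_diag_def proj_def bell_real)

lemma bd_herm: "hermitian (bell_diag p)"
  unfolding hermitian_def
proof (intro conjI)
  show "adj (bell_diag p) = bell_diag p"
  proof (rule eq_matI)
    fix a b assume "a < dim_row (bell_diag p)" "b < dim_col (bell_diag p)"
    hence a: "a < 4" and b: "b < 4" by auto
    show "adj (bell_diag p) $$ (a,b) = bell_diag p $$ (a,b)"
      using a b by (simp add: bd_entry bell_real mult.commute)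
  qed auto
qed simp

lemma bd_mulvec:
  assumes v: "v \<in> carrier_vec 4" and a: "a < 4"
  shows "(bell_diag p *\<^sub>v v) $ a = (\<Sum>i\<in>{1..4}. complex_of_real (p i) * bell i a * cip 4 (bv i) v)"
proof -
  have "(bell_diag p *\<^sub>v v) $ a = (\<Sum>b<4. bell_diag p $$ (a,b) * v $ b)"
    using mult_vec_entry[OF bd_carrier v a] .
  also have "\<dots> = (\<Sum>b<4. \<Sum>i\<in>{1..4}. complex_of_real (p i) * bell i a * (bell i b * v $ b))"
    by (rule sum.cong[OF refl]) (use a in \<open>simp add: bd_entry sum_distrib_right sum_distrib_left mult_ac\<close>)
  also have "\<dots> = (\<Sum>i\<in>{1..4}. \<Sum>b<4. complex_of_real (p i) * bell i a * (bell i b * v $ b))"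
    by (rule sum.swap)
  also have "\<dots> = (\<Sum>i\<in>{1..4}. complex_of_real (p i) * bell i a * cip 4 (bv i) v)"
    by (rule sum.cong[OF refl]) (simp add: cip_bv[OF v] sum_distrib_left)
  finally show ?thesis .
qed

lemma bd_proj:
  assumes v: "v \<in> carrier_vec 4" and k: "k \<in> {1..4}"
  shows "cip 4 (bv k) (bell_diag p *\<^sub>v v) = complex_of_real (p k) * cip 4 (bv k) v"
proof -
  have "cip 4 (bv k) (bell_diag p *\<^sub>v v) =
     (\<Sum>a<4. bell k a * (\<Sum>i\<in>{1..4}. complex_of_real (p i) * bell i a * cip 4 (bv i) v))"
    unfolding cip_bv[OF mult_mat_vec_carrier[OF bd_carrier v]]
    by (rule sum.cong[OF refl]) (simp add: bd_mulvec[OF v] del: index_mult_mat_vec)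
  also have "\<dots> = (\<Sum>a<4. \<Sum>i\<in>{1..4}. complex_of_real (p i) * cip 4 (bv i) v * (cnj (bell k a) * bell i a))"
    by (rule sum.cong[OF refl]) (simp add: sum_distrib_left bell_real mult_ac)
  also have "\<dots> = (\<Sum>i\<in>{1..4}. complex_of_real (p i) * cip 4 (bv i) v * (\<Sum>a<4. cnj (bell k a) * bell i a))"
    by (subst sum.swap) (simp add: sum_distrib_left)
  also have "\<dots> = (\<Sum>i\<in>{1..4}. if i = k then complex_of_real (p k) * cip 4 (bv k) v else 0)"
    by (rule sum.cong[OF refl]) (use k in \<open>simp add: bell_orth\<close>)
  also have "\<dots> = complex_of_real (p k) * cip 4 (bv k) v" using k by simp
  finally show ?thesis .
qed

lemma bd_eig:
  assumes k: "k \<in> {1..4}"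
  shows "bell_diag p *\<^sub>v bv k = complex_of_real (p k) \<cdot>\<^sub>v bv k"
proof (rule eq_vecI)
  fix a assume "a < dim_vec (complex_of_real (p k) \<cdot>\<^sub>v bv k)"
  hence a: "a < 4" by simp
  have "(bell_diag p *\<^sub>v bv k) $ a = (\<Sum>i\<in>{1..4}. complex_of_real (p i) * bell i a * cip 4 (bv i) (bv k))"
    using bd_mulvec[OF bv_carrier a] .
  also have "\<dots> = (\<Sum>i\<in>{1..4}. if i = k then complex_of_real (p k) * bell k a else 0)"
    by (rule sum.cong[OF refl]) (use k in \<open>simp add: cip_bv_bv\<close>)
  also have "\<dots> = complex_of_real (p k) * bell k a" using k by simp
  finally show "(bell_diag p *\<^sub>v bv k) $ a = (complex_of_real (p k) \<cdot>\<^sub>v bv k) $ a" using a by simp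
qed simp

lemma bd_ker:
  assumes v: "v \<in> carrier_vec 4"
  shows "bell_diag p *\<^sub>v v = 0\<^sub>v 4 \<longleftrightarrow> (\<forall>i\<in>{1..4}. complex_of_real (p i) * cip 4 (bv i) v = 0)"
proof
  assume h: "bell_diag p *\<^sub>v v = 0\<^sub>v 4"
  show "\<forall>i\<in>{1..4}. complex_of_real (p i) * cip 4 (bv i) v = 0"
  proof
    fix i :: nat assume i: "i \<in> {1..4}"
    have "complex_of_real (p i) * cip 4 (bv i) v = cip 4 (bv i) (bell_diag p *\<^sub>v v)"
      using bd_proj[OF v i] by simp
    also have "\<dots> = 0" unfolding h by (simp add: cip_def)
    finally show "complex_of_real (p i) * cip 4 (bv i) v = 0" .
  qed
next
  assume h: "\<forall>i\<in>{1..4}. complex_of_real (p i) * cip 4 (bv i) v = 0"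
  show "bell_diag p *\<^sub>v v = 0\<^sub>v 4"
  proof (rule eq_vecI)
    fix a assume "a < dim_vec (0\<^sub>v 4 :: complex vec)" hence a: "a < 4" by simp
    have "(bell_diag p *\<^sub>v v) $ a = (\<Sum>i\<in>{1..4}. complex_of_real (p i) * bell i a * cip 4 (bv i) v)"
      using bd_mulvec[OF v a] .
    also have "\<dots> = 0"
      by (rule sum.neutral) (use h in \<open>auto simp: mult_ac\<close>)
    finally show "(bell_diag p *\<^sub>v v) $ a = 0\<^sub>v 4 $ a" using a by simp
  qed simp
qed

lemma bd_tr:
  assumes M: "M \<in> carrier_mat 4 4"
  shows "tr (bell_diag p * M) = (\<Sum>i\<in>{1..4}. complex_of_real (p i) * cip 4 (bv i) (M *\<^sub>v bv i))"
proof -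
  have "tr (bell_diag p * M) = (\<Sum>a<4. (bell_diag p * M) $$ (a,a))"
    unfolding tr_def using M by simp
  also have "\<dots> = (\<Sum>a<4. \<Sum>b<4. \<Sum>i\<in>{1..4}. complex_of_real (p i) * (bell i b * (M $$ (b,a) * bell i a)))"
    by (rule sum.cong[OF refl]) (use M in \<open>auto simp: mult_entry[OF bd_carrier M] bd_entry sum_distrib_right sum_distrib_left mult_ac simp del: index_mult_mat intro!: sum.cong\<close>)
  also have "\<dots> = (\<Sum>a<4. \<Sum>i\<in>{1..4}. \<Sum>b<4. complex_of_real (p i) * (bell i b * (M $$ (b,a) * bell i a)))"
    by (rule sum.cong[OF refl], rule sum.swap)
  also have "\<dots> = (\<Sum>i\<in>{1..4}. \<Sum>a<4. \<Sum>b<4. complex_of_real (p i) * (bell i b * (M $$ (b,a) * bell i a)))"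
    by (rule sum.swap)
  also have "\<dots> = (\<Sum>i\<in>{1..4}. \<Sum>b<4. \<Sum>a<4. complex_of_real (p i) * (bell i b * (M $$ (b,a) * bell i a)))"
    by (rule sum.cong[OF refl], rule sum.swap)
  also have "\<dots> = (\<Sum>i\<in>{1..4}. complex_of_real (p i) * cip 4 (bv i) (M *\<^sub>v bv i))"
    by (rule sum.cong[OF refl]) (use M in \<open>simp add: cip_bv mult_vec_entry[OF M bv_carrier] sum_distrib_left del: index_mult_mat_vec\<close>)
  finally show ?thesis .
qed

lemma bv_tr:
  assumes M: "M \<in> carrier_mat 4 4"
  shows "(\<Sum>i\<in>{1..4}. cip 4 (bv i) (M *\<^sub>v bv i)) = tr M"
proof -
  have "(\<Sum>i\<in>{1..4}. cip 4 (bv i) (M *\<^sub>v bv i)) = (\<Sum>i\<in>{1..4}. \<Sum>b<4. \<Sum>a<4. M $$ (b,a) * (bell i a * cnj (bell i b)))"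
    by (rule sum.cong[OF refl]) (use M in \<open>simp add: cip_bv mult_vec_entry[OF M bv_carrier] sum_distrib_left bell_real mult_ac del: index_mult_mat_vec\<close>)
  also have "\<dots> = (\<Sum>b<4. \<Sum>i\<in>{1..4}. \<Sum>a<4. M $$ (b,a) * (bell i a * cnj (bell i b)))"
    by (rule sum.swap)
  also have "\<dots> = (\<Sum>b<4. \<Sum>a<4. \<Sum>i\<in>{1..4}. M $$ (b,a) * (bell i a * cnj (bell i b)))"
    by (rule sum.cong[OF refl], rule sum.swap)
  also have "\<dots> = (\<Sum>b<4. \<Sum>a<4. M $$ (b,a) * (\<Sum>i\<in>{1..4}. bell i a * cnj (bell i b)))"
    by (simp add: sum_distrib_left)
  also have "\<dots> = (\<Sum>b<4. \<Sum>a<4. if a = b then M $$ (b,b) else 0)"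
    by (intro sum.cong refl) (simp add: bell_compl bell_compl[unfolded One_nat_def])
  also have "\<dots> = tr M" unfolding tr_def using M by simp
  finally show ?thesis .
qed

lemma cnj_mult_self: "cnj z * z = complex_of_real ((cmod z)\<^sup>2)"
  by (metis complex_norm_square mult.commute)

lemma Re_cnj_mult_self: "Re (cnj z * z) = (cmod z)\<^sup>2"
  by (simp add: cnj_mult_self)

lemma psd2:
  fixes F01 :: complex and f0 f1 :: real
  assumes pos: "\<forall>s t. 0 \<le> Re (cnj s * complex_of_real f0 * s + cnj s * F01 * t + cnj t * cnj F01 * s
      + cnj t * complex_of_real f1 * t)"
  shows "0 \<le> f0" "0 \<le> f1" "(cmod F01)\<^sup>2 \<le> f0 * f1"
proof -
  show f0: "0 \<le> f0" using spec[OF spec[OF pos, of 1], of 0] by simp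
  show f1: "0 \<le> f1" using spec[OF spec[OF pos, of 0], of 1] by simp
  show "(cmod F01)\<^sup>2 \<le> f0 * f1"
  proof (cases "f0 = 0")
    case False
    hence f0p: "f0 > 0" using f0 by simp
    have "0 \<le> Re (cnj (- F01) * complex_of_real f0 * (- F01) + cnj (- F01) * F01 * complex_of_real f0
       + complex_of_real f0 * cnj F01 * (- F01) + complex_of_real f0 * complex_of_real f1 * complex_of_real f0)"
      using spec[OF spec[OF pos, of "- F01"], of "complex_of_real f0"] by simp
    also have "\<dots> = f0 * (f0 * f1 - (cmod F01)\<^sup>2)"
    proof -
      have "cnj (- F01) * complex_of_real f0 * (- F01) + cnj (- F01) * F01 * complex_of_real f0
       + complex_of_real f0 * cnj F01 * (- F01) + complex_of_real f0 * complex_of_real f1 * complex_of_real f0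
        = complex_of_real f0 * (complex_of_real f0 * complex_of_real f1 - cnj F01 * F01)"
        by (simp add: algebra_simps)
      thus ?thesis by (simp add: cnj_mult_self)
    qed
    finally show ?thesis using f0p by (simp add: zero_le_mult_iff)
  next
    case True
    show ?thesis
    proof (rule ccontr)
      assume "\<not> ?thesis"
      hence np: "(cmod F01)\<^sup>2 > 0" using True by simp
      define T where "T = (f1 + 1) / (2 * (cmod F01)\<^sup>2)"
      have "0 \<le> Re (cnj (- F01 * complex_of_real T) * complex_of_real f0 * (- F01 * complex_of_real T)
        + cnj (- F01 * complex_of_real T) * F01 * 1 + cnj 1 * cnj F01 * (- F01 * complex_of_real T)
        + cnj 1 * complex_of_real f1 * 1)"
        using spec[OF spec[OF pos, of "- F01 * complex_of_real T"], of 1] by simp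
      also have "\<dots> = f1 - 2 * T * (cmod F01)\<^sup>2"
      proof -
        have "cnj (- F01 * complex_of_real T) * complex_of_real f0 * (- F01 * complex_of_real T)
        + cnj (- F01 * complex_of_real T) * F01 * 1 + cnj 1 * cnj F01 * (- F01 * complex_of_real T)
        + cnj 1 * complex_of_real f1 * 1 = complex_of_real f1 - 2 * complex_of_real T * (cnj F01 * F01)"
          using True by (simp add: algebra_simps)
        thus ?thesis by (simp add: cnj_mult_self)
      qed
      also have "\<dots> = -1" using np by (simp add: T_def field_simps)
      finally show False by simp
    qed
  qed
qed

lemma cs_bound:
  fixes w :: complex and X Y :: real
  assumes "0 \<le> X" "0 \<le> Y" "(cmod w)\<^sup>2 \<le> X * Y"
  shows "cmod w \<le> (X + Y) / 2" "\<bar>Re w\<bar> \<le> (X + Y) / 2"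
proof -
  have "X * Y \<le> ((X + Y) / 2)\<^sup>2"
  proof -
    have "0 \<le> ((X - Y) / 2)\<^sup>2" by simp
    thus ?thesis by (simp add: power2_eq_square field_simps)
  qed
  hence "(cmod w)\<^sup>2 \<le> ((X + Y) / 2)\<^sup>2" using assms(3) by linarith
  thus c: "cmod w \<le> (X + Y) / 2" by (rule power2_le_imp_le) (use assms in simp)
  show "\<bar>Re w\<bar> \<le> (X + Y) / 2" using abs_Re_le_cmod[of w] c by linarith
qed

lemma lessThan2: "{..<2::nat} = {0,1}" by auto

lemma dens2:
  assumes "density 2 A"
  shows "\<exists>a d. A $$ (0,0) = complex_of_real a \<and> A $$ (1,1) = complex_of_real d \<and>
     A $$ (1,0) = cnj (A $$ (0,1)) \<and> 0 \<le> a \<and> 0 \<le> d \<and> a + d = 1 \<and> (cmod (A $$ (0,1)))\<^sup>2 \<le> a * d \<and>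
     (\<forall>s t. 0 \<le> Re (cnj s * A $$ (0,0) * s + cnj s * A $$ (0,1) * t + cnj t * A $$ (1,0) * s
      + cnj t * A $$ (1,1) * t))"
proof -
  have Ac: "A \<in> carrier_mat 2 2" and h: "adj A = A" and tr: "tr A = 1"
    and ps: "\<forall>v::nat \<Rightarrow> complex. 0 \<le> Re (\<Sum>i<2. \<Sum>j<2. cnj (v i) * A $$ (i,j) * v j)"
    using assms unfolding density_def psd_def hermitian_def by auto
  have e10: "A $$ (1,0) = cnj (A $$ (0,1))" using herm_entry[OF Ac h, of 1 0] by simp
  have e00: "A $$ (0,0) = complex_of_real (Re (A $$ (0,0)))"
    using herm_entry[OF Ac h, of 0 0] by (metis Reals_cnj_iff Re_complex_of_real Reals_cases zero_less_numeral)
  have e11: "A $$ (1,1) = complex_of_real (Re (A $$ (1,1)))"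
    using herm_entry[OF Ac h, of 1 1] by (metis Reals_cnj_iff Re_complex_of_real Reals_cases one_less_numeral_iff semiring_norm(76))
  have pos: "\<forall>s t. 0 \<le> Re (cnj s * A $$ (0,0) * s + cnj s * A $$ (0,1) * t + cnj t * A $$ (1,0) * s
      + cnj t * A $$ (1,1) * t)"
  proof (intro allI)
    fix s t
    have "0 \<le> Re (\<Sum>i<2. \<Sum>j<2. cnj ((\<lambda>i. if i = 0 then s else t) i) * A $$ (i,j) * (\<lambda>i. if i = 0 then s else t) j)"
      using spec[OF ps, of "\<lambda>i. if i = 0 then s else t"] by simp
    thus "0 \<le> Re (cnj s * A $$ (0,0) * s + cnj s * A $$ (0,1) * t + cnj t * A $$ (1,0) * s
      + cnj t * A $$ (1,1) * t)" unfolding lessThan2 by (simp add: algebra_simps)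
  qed
  have pos': "\<forall>s t. 0 \<le> Re (cnj s * complex_of_real (Re (A $$ (0,0))) * s + cnj s * A $$ (0,1) * t
      + cnj t * cnj (A $$ (0,1)) * s + cnj t * complex_of_real (Re (A $$ (1,1))) * t)"
    using pos e00 e11 e10 by metis
  note P = psd2[OF pos']
  have "tr A = A $$ (0,0) + A $$ (1,1)" unfolding tr_def using Ac by (simp add: lessThan2)
  hence "Re (A $$ (0,0)) + Re (A $$ (1,1)) = 1" using tr by (metis Re_complex_of_real plus_complex.sel(1) one_complex.sel(1))
  thus ?thesis using P e00 e11 e10 pos by blast
qed

lemma dens_carrier: "density n A \<Longrightarrow> A \<in> carrier_mat n n"
  unfolding density_def psd_def by auto

lemma kron_carrier: "A \<in> carrier_mat 2 2 \<Longrightarrow> B \<in> carrier_mat 2 2 \<Longrightarrow> kron A B \<in> carrier_mat 4 4"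
  unfolding kron_def by auto

lemma kron_entry: "A \<in> carrier_mat 2 2 \<Longrightarrow> B \<in> carrier_mat 2 2 \<Longrightarrow> a < 4 \<Longrightarrow> b < 4 \<Longrightarrow>
  kron A B $$ (a,b) = A $$ (a div 2, b div 2) * B $$ (a mod 2, b mod 2)"
  unfolding kron_def by auto

lemma kron_cip:
  assumes A: "A \<in> carrier_mat 2 2" and B: "B \<in> carrier_mat 2 2" and x: "x \<in> carrier_vec 4"
  shows "cip 4 x (kron A B *\<^sub>v x) = (\<Sum>a<4. \<Sum>b<4. cnj (x $ a) * (A $$ (a div 2, b div 2) * B $$ (a mod 2, b mod 2)) * x $ b)"
  unfolding cip_def
  by (rule sum.cong[OF refl]) (simp add: mult_vec_entry[OF kron_carrier[OF A B] x] kron_entry[OF A B]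
      sum_distrib_left mult_ac del: index_mult_mat_vec)

lemma kron_bell4:
  assumes A: "A \<in> carrier_mat 2 2" and B: "B \<in> carrier_mat 2 2"
  shows "cip 4 (bv 4) (kron A B *\<^sub>v bv 4) = (1/2) * (A $$ (0,0) * B $$ (1,1) + A $$ (1,1) * B $$ (0,0)
     - A $$ (0,1) * B $$ (1,0) - A $$ (1,0) * B $$ (0,1))"
proof -
  have "cip 4 (bv 4) (kron A B *\<^sub>v bv 4) = s2 * s2 * (A $$ (0,0) * B $$ (1,1) + A $$ (1,1) * B $$ (0,0)
     - A $$ (0,1) * B $$ (1,0) - A $$ (1,0) * B $$ (0,1))"
    unfolding kron_cip[OF A B bv_carrier] lessThan4
    by (simp add: bell_vals algebra_simps)
  thus ?thesis by (simp add: s2_sq)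
qed

lemma kron_bell4_le:
  assumes A: "density 2 A" and B: "density 2 B"
  shows "Re (cip 4 (bv 4) (kron A B *\<^sub>v bv 4)) \<le> 1/2"
proof -
  obtain a d where ad: "A $$ (0,0) = complex_of_real a" "A $$ (1,1) = complex_of_real d"
     "A $$ (1,0) = cnj (A $$ (0,1))" "0 \<le> a" "0 \<le> d" "a + d = 1" "(cmod (A $$ (0,1)))\<^sup>2 \<le> a * d"
    using dens2[OF A] by blast
  obtain b e where be: "B $$ (0,0) = complex_of_real b" "B $$ (1,1) = complex_of_real e"
     "B $$ (1,0) = cnj (B $$ (0,1))" "0 \<le> b" "0 \<le> e" "b + e = 1" "(cmod (B $$ (0,1)))\<^sup>2 \<le> b * e"
    using dens2[OF B] by blast
  define z where "z = A $$ (0,1)"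
  define u where "u = B $$ (0,1)"
  define w where "w = z * cnj u"
  have eq: "cip 4 (bv 4) (kron A B *\<^sub>v bv 4) = (1/2) * (complex_of_real (a * e + d * b) - (w + cnj w))"
    unfolding kron_bell4[OF dens_carrier[OF A] dens_carrier[OF B]] ad be
    by (simp add: w_def z_def u_def ad[unfolded One_nat_def] be[unfolded One_nat_def] algebra_simps)
  have "(cmod w)\<^sup>2 \<le> (a * b) * (d * e)"
  proof -
    have "(cmod w)\<^sup>2 = (cmod z)\<^sup>2 * (cmod u)\<^sup>2" by (simp add: w_def norm_mult power_mult_distrib)
    also have "\<dots> \<le> (a * d) * (b * e)"
      using ad(4,5,7) be(4,5,7) unfolding z_def u_def by (intro mult_mono) auto
    finally show ?thesis by (simp add: mult_ac)
  qed
  hence h1: "\<bar>Re w\<bar> \<le> (a * b + d * e) / 2" using cs_bound(2)[of "a*b" "d*e" w] ad be by simp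
  have h2: "Re (cip 4 (bv 4) (kron A B *\<^sub>v bv 4)) = (a * e + d * b) / 2 - Re w"
    unfolding eq by simp
  have h3: "a * e + d * b + (a * b + d * e) = 1"
  proof -
    have "a * e + d * b + (a * b + d * e) = (a + d) * (b + e)" by (simp add: algebra_simps)
    thus ?thesis using ad(6) be(6) by simp
  qed
  have "Re (cip 4 (bv 4) (kron A B *\<^sub>v bv 4)) \<le> (a * e + d * b) / 2 + (a * b + d * e) / 2"
    using h1 h2 abs_ge_minus_self[of "Re w"] by linarith
  also have "\<dots> = 1/2" using h3 by (simp add: field_simps)
  finally show ?thesis .
qed

lemma kron_psd:
  assumes A: "density 2 A" and B: "density 2 B" and x: "x \<in> carrier_vec 4"
  shows "0 \<le> Re (cip 4 x (kron A B *\<^sub>v x))"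
proof -
  obtain a d where ad: "A $$ (0,0) = complex_of_real a" "A $$ (1,1) = complex_of_real d"
     "A $$ (1,0) = cnj (A $$ (0,1))" "0 \<le> a" "0 \<le> d" "a + d = 1" "(cmod (A $$ (0,1)))\<^sup>2 \<le> a * d"
     and posA: "\<forall>s t. 0 \<le> Re (cnj s * A $$ (0,0) * s + cnj s * A $$ (0,1) * t + cnj t * A $$ (1,0) * s
      + cnj t * A $$ (1,1) * t)"
    using dens2[OF A] by blast
  obtain b e where be: "B $$ (0,0) = complex_of_real b" "B $$ (1,1) = complex_of_real e"
     "B $$ (1,0) = cnj (B $$ (0,1))" "0 \<le> b" "0 \<le> e" "b + e = 1" "(cmod (B $$ (0,1)))\<^sup>2 \<le> b * e"
    using dens2[OF B] by blast
  define z where "z = A $$ (0,1)"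
  define u where "u = B $$ (0,1)"
  define x0 where "x0 = x $ 0"
  define x1 where "x1 = x $ 1"
  define x2 where "x2 = x $ 2"
  define x3 where "x3 = x $ 3"
  define G00 where "G00 = cnj x0 * complex_of_real a * x0 + cnj x0 * z * x2 + cnj x2 * cnj z * x0 + cnj x2 * complex_of_real d * x2"
  define G01 where "G01 = cnj x0 * complex_of_real a * x1 + cnj x0 * z * x3 + cnj x2 * cnj z * x1 + cnj x2 * complex_of_real d * x3"
  define G11 where "G11 = cnj x1 * complex_of_real a * x1 + cnj x1 * z * x3 + cnj x3 * cnj z * x1 + cnj x3 * complex_of_real d * x3"
  have eq: "cip 4 x (kron A B *\<^sub>v x) = complex_of_real b * G00 + u * G01 + cnj u * cnj G01 + complex_of_real e * G11"
    unfolding kron_cip[OF dens_carrier[OF A] dens_carrier[OF B] x] lessThan4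
    by (simp add: ad be ad[unfolded One_nat_def] be[unfolded One_nat_def] G00_def G01_def G11_def x0_def x1_def x2_def x3_def z_def u_def algebra_simps)
  have g00: "G00 = complex_of_real (Re G00)"
  proof -
    have "cnj G00 = G00" by (simp add: G00_def algebra_simps)
    thus ?thesis by (metis Reals_cnj_iff Re_complex_of_real Reals_cases)
  qed
  have g11: "G11 = complex_of_real (Re G11)"
  proof -
    have "cnj G11 = G11" by (simp add: G11_def algebra_simps)
    thus ?thesis by (metis Reals_cnj_iff Re_complex_of_real Reals_cases)
  qed
  have posG: "\<forall>s t. 0 \<le> Re (cnj s * complex_of_real (Re G00) * s + cnj s * G01 * t + cnj t * cnj G01 * s
      + cnj t * complex_of_real (Re G11) * t)"
  proof (intro allI)
    fix s t
    have "0 \<le> Re (cnj (s * x0 + t * x1) * A $$ (0,0) * (s * x0 + t * x1) + cnj (s * x0 + t * x1) * A $$ (0,1) * (s * x2 + t * x3)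
       + cnj (s * x2 + t * x3) * A $$ (1,0) * (s * x0 + t * x1) + cnj (s * x2 + t * x3) * A $$ (1,1) * (s * x2 + t * x3))"
      using posA by blast
    also have "cnj (s * x0 + t * x1) * A $$ (0,0) * (s * x0 + t * x1) + cnj (s * x0 + t * x1) * A $$ (0,1) * (s * x2 + t * x3)
       + cnj (s * x2 + t * x3) * A $$ (1,0) * (s * x0 + t * x1) + cnj (s * x2 + t * x3) * A $$ (1,1) * (s * x2 + t * x3)
      = cnj s * G00 * s + cnj s * G01 * t + cnj t * cnj G01 * s + cnj t * G11 * t"
      unfolding ad(1,2,3) z_def[symmetric] by (simp add: G00_def G01_def G11_def algebra_simps)
    finally show "0 \<le> Re (cnj s * complex_of_real (Re G00) * s + cnj s * G01 * t + cnj t * cnj G01 * s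
      + cnj t * complex_of_real (Re G11) * t)" using g00 g11 by simp
  qed
  note P = psd2[OF posG]
  have "(cmod (u * G01))\<^sup>2 \<le> (b * Re G00) * (e * Re G11)"
  proof -
    have "(cmod (u * G01))\<^sup>2 = (cmod u)\<^sup>2 * (cmod G01)\<^sup>2" by (simp add: norm_mult power_mult_distrib)
    also have "\<dots> \<le> (b * e) * (Re G00 * Re G11)"
      using be(4,5,7) P unfolding u_def by (intro mult_mono) auto
    finally show ?thesis by (simp add: mult_ac)
  qed
  hence h1: "\<bar>Re (u * G01)\<bar> \<le> (b * Re G00 + e * Re G11) / 2"
    using cs_bound(2)[of "b * Re G00" "e * Re G11" "u * G01"] be P by simp
  have h2: "Re (cip 4 x (kron A B *\<^sub>v x)) = b * Re G00 + e * Re G11 + 2 * Re (u * G01)"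
    unfolding eq by simp
  have h3: "0 \<le> b * Re G00 + e * Re G11" using be P by simp
  have h4: "- Re (u * G01) \<le> (b * Re G00 + e * Re G11) / 2"
    by (rule order_trans[OF abs_ge_minus_self h1])
  show ?thesis unfolding h2 using h4 by (simp add: field_simps)
qed

lemma kron_herm_entry:
  assumes A: "density 2 A" and B: "density 2 B" and a: "a < 4" and b: "b < 4"
  shows "cnj (kron A B $$ (b,a)) = kron A B $$ (a,b)"
proof -
  have Ac: "A \<in> carrier_mat 2 2" and hA: "adj A = A" using A unfolding density_def psd_def hermitian_def by auto
  have Bc: "B \<in> carrier_mat 2 2" and hB: "adj B = B" using B unfolding density_def psd_def hermitian_def by auto
  have "cnj (A $$ (b div 2, a div 2)) = A $$ (a div 2, b div 2)"
    using herm_entry[OF Ac hA, of "a div 2" "b div 2"] a b by simp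
  moreover have "cnj (B $$ (b mod 2, a mod 2)) = B $$ (a mod 2, b mod 2)"
    using herm_entry[OF Bc hB, of "a mod 2" "b mod 2"] by simp
  ultimately show ?thesis using a b by (simp add: kron_entry[OF Ac Bc])
qed

lemma kron_tr:
  assumes A: "density 2 A" and B: "density 2 B"
  shows "(\<Sum>a<4. kron A B $$ (a,a)) = 1"
proof -
  have Ac: "A \<in> carrier_mat 2 2" and tA: "tr A = 1" using A unfolding density_def psd_def by auto
  have Bc: "B \<in> carrier_mat 2 2" and tB: "tr B = 1" using B unfolding density_def psd_def by auto
  have "(\<Sum>a<4. kron A B $$ (a,a)) = (A $$ (0,0) + A $$ (1,1)) * (B $$ (0,0) + B $$ (1,1))"
    unfolding lessThan4 by (simp add: kron_entry[OF Ac Bc] algebra_simps)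
  also have "A $$ (0,0) + A $$ (1,1) = 1" using tA Ac unfolding tr_def by (simp add: lessThan2)
  also have "B $$ (0,0) + B $$ (1,1) = 1" using tB Bc unfolding tr_def by (simp add: lessThan2)
  finally show ?thesis by simp
qed

lemma sep_props:
  assumes "separable S"
  shows "S \<in> carrier_mat 4 4" "hermitian S" "\<forall>x\<in>carrier_vec 4. 0 \<le> Re (cip 4 x (S *\<^sub>v x))"
    "tr S = 1" "Re (cip 4 (bv 4) (S *\<^sub>v bv 4)) \<le> 1/2"
proof -
  obtain k :: nat and q :: "nat \<Rightarrow> real" and A B :: "nat \<Rightarrow> complex mat" where h: "\<forall>i<k. 0 \<le> q i \<and> density 2 (A i) \<and> density 2 (B i)" and qs: "(\<Sum>i<k. q i) = 1"
    and S: "S = mat 4 4 (\<lambda>(a,b). \<Sum>i<k. complex_of_real (q i) * kron (A i) (B i) $$ (a,b))"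
    using assms unfolding separable_def by blast
  have Ac: "A i \<in> carrier_mat 2 2" "B i \<in> carrier_mat 2 2" if "i < k" for i
    using h that dens_carrier by blast+
  show Sc: "S \<in> carrier_mat 4 4" unfolding S by simp
  show "hermitian S"
    unfolding hermitian_def
  proof (intro conjI)
    show "adj S = S"
    proof (rule eq_matI)
      fix a b assume "a < dim_row S" "b < dim_col S"
      hence a: "a < 4" and b: "b < 4" using Sc by auto
      have "adj S $$ (a,b) = cnj (S $$ (b,a))" using a b Sc by simp
      also have "\<dots> = (\<Sum>i<k. complex_of_real (q i) * kron (A i) (B i) $$ (a,b))"
        unfolding S using a b h by (simp add: kron_herm_entry)
      also have "\<dots> = S $$ (a,b)" unfolding S using a b by simp
      finally show "adj S $$ (a,b) = S $$ (a,b)" .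
    qed (use Sc in auto)
  qed (use Sc in auto)
  have Sentry: "S $$ (a,b) = (\<Sum>i<k. complex_of_real (q i) * kron (A i) (B i) $$ (a,b))"
    if "a < 4" "b < 4" for a b using that unfolding S by simp
  have cipS: "cip 4 x (S *\<^sub>v x) = (\<Sum>i<k. complex_of_real (q i) * cip 4 x (kron (A i) (B i) *\<^sub>v x))"
    if x: "x \<in> carrier_vec 4" for x
  proof -
    have "cip 4 x (S *\<^sub>v x) = (\<Sum>a<4. \<Sum>b<4. \<Sum>i<k. complex_of_real (q i) * (cnj (x $ a) * kron (A i) (B i) $$ (a,b) * x $ b))"
      unfolding cip_def
      by (rule sum.cong[OF refl]) (simp add: mult_vec_entry[OF Sc x] Sentry sum_distrib_left sum_distrib_right mult_ac del: index_mult_mat_vec)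
    also have "\<dots> = (\<Sum>a<4. \<Sum>i<k. \<Sum>b<4. complex_of_real (q i) * (cnj (x $ a) * kron (A i) (B i) $$ (a,b) * x $ b))"
      by (rule sum.cong[OF refl], rule sum.swap)
    also have "\<dots> = (\<Sum>i<k. \<Sum>a<4. \<Sum>b<4. complex_of_real (q i) * (cnj (x $ a) * kron (A i) (B i) $$ (a,b) * x $ b))"
      by (rule sum.swap)
    also have "\<dots> = (\<Sum>i<k. complex_of_real (q i) * cip 4 x (kron (A i) (B i) *\<^sub>v x))"
    proof (rule sum.cong[OF refl])
      fix i assume "i \<in> {..<k}"
      hence i: "i < k" by simp
      show "(\<Sum>a<4. \<Sum>b<4. complex_of_real (q i) * (cnj (x $ a) * kron (A i) (B i) $$ (a,b) * x $ b)) =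
        complex_of_real (q i) * cip 4 x (kron (A i) (B i) *\<^sub>v x)"
        unfolding kron_cip[OF Ac(1)[OF i] Ac(2)[OF i] x]
        by (simp add: sum_distrib_left kron_entry[OF Ac(1)[OF i] Ac(2)[OF i]])
    qed
    finally show ?thesis .
  qed
  have ReS: "Re (cip 4 x (S *\<^sub>v x)) = (\<Sum>i<k. q i * Re (cip 4 x (kron (A i) (B i) *\<^sub>v x)))"
    if x: "x \<in> carrier_vec 4" for x
    unfolding cipS[OF x] by (simp add: Re_sum)
  show "\<forall>x\<in>carrier_vec 4. 0 \<le> Re (cip 4 x (S *\<^sub>v x))"
  proof
    fix x :: "complex vec" assume x: "x \<in> carrier_vec 4"
    show "0 \<le> Re (cip 4 x (S *\<^sub>v x))"
      unfolding ReS[OF x] using h kron_psd[OF _ _ x] by (intro sum_nonneg) auto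
  qed
  show "Re (cip 4 (bv 4) (S *\<^sub>v bv 4)) \<le> 1/2"
  proof -
    have "Re (cip 4 (bv 4) (S *\<^sub>v bv 4)) \<le> (\<Sum>i<k. q i * (1/2))"
      unfolding ReS[OF bv_carrier] using h kron_bell4_le by (intro sum_mono mult_left_mono) auto
    also have "\<dots> = (\<Sum>i<k. q i) * (1/2)" by (rule sum_distrib_right[symmetric])
    also have "\<dots> = 1/2" using qs by simp
    finally show ?thesis .
  qed
  show "tr S = 1"
  proof -
    have "tr S = (\<Sum>a<4. \<Sum>i<k. complex_of_real (q i) * kron (A i) (B i) $$ (a,a))"
      unfolding tr_def using Sc by (simp add: S)
    also have "\<dots> = (\<Sum>i<k. complex_of_real (q i) * (\<Sum>a<4. kron (A i) (B i) $$ (a,a)))"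
      by (subst sum.swap) (simp add: sum_distrib_left)
    also have "\<dots> = (\<Sum>i<k. complex_of_real (q i))"
      using h kron_tr by (intro sum.cong) auto
    also have "\<dots> = 1" using qs by (metis of_real_1 of_real_sum)
    finally show ?thesis .
  qed
qed

lemma mat_fun_spec:
  assumes "hermitian A"
  shows "\<exists>U lam. unitary (dim_row A) U \<and>
     A = U * mat_diag (dim_row A) (\<lambda>i. complex_of_real (lam i)) * adj U \<and>
     mat_fun f A = U * mat_diag (dim_row A) (\<lambda>i. complex_of_real (f (lam i))) * adj U"
proof -
  obtain U lam where "unitary (dim_row A) U \<and>
     A = U * mat_diag (dim_row A) (\<lambda>i. complex_of_real (lam i)) * adj U"
    using spectral[OF assms] by blast
  hence ex: "\<exists>B. \<exists>U (lam::nat \<Rightarrow> real). unitary (dim_row A) U \<and>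
       A = U * mat_diag (dim_row A) (\<lambda>i. complex_of_real (lam i)) * adj U \<and>
       B = U * mat_diag (dim_row A) (\<lambda>i. complex_of_real (f (lam i))) * adj U" by blast
  show ?thesis using someI_ex[OF ex] unfolding mat_fun_def by blast
qed

lemma unitary_carrier: "unitary n U \<Longrightarrow> U \<in> carrier_mat n n"
  unfolding unitary_def by auto

lemma mat_fun_carrier:
  assumes "hermitian A" shows "mat_fun f A \<in> carrier_mat (dim_row A) (dim_row A)"
proof -
  obtain U lam where U: "unitary (dim_row A) U"
    "mat_fun f A = U * mat_diag (dim_row A) (\<lambda>i. complex_of_real (f (lam i))) * adj U"
    using mat_fun_spec[OF assms, of f] by blast
  have Uc: "U \<in> carrier_mat (dim_row A) (dim_row A)" using unitary_carrier[OF U(1)] .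
  show ?thesis unfolding U(2) using Uc by (meson adj_carrier mat_diag_dim mult_carrier_mat)
qed

lemma tr_minus:
  assumes "X \<in> carrier_mat n n" "Y \<in> carrier_mat n n"
  shows "tr (X - Y) = tr X - tr Y"
  unfolding tr_def using assms by (simp add: sum_subtractf)

lemma re_tr_split:
  assumes L: "L \<in> carrier_mat 4 4" and M: "M \<in> carrier_mat 4 4"
  shows "Re (tr (bell_diag p * (L - M))) = Re (tr (bell_diag p * L)) - Re (tr (bell_diag p * M))"
proof -
  have "bell_diag p * (L - M) = bell_diag p * L - bell_diag p * M"
    by (rule mult_minus_distrib_mat[OF bd_carrier L M])
  moreover have "tr (bell_diag p * L - bell_diag p * M) = tr (bell_diag p * L) - tr (bell_diag p * M)"
    by (rule tr_minus[of _ 4]) (use L M in auto)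
  ultimately show ?thesis by simp
qed

lemma cip_smult: "y \<in> carrier_vec n \<Longrightarrow> cip n x (c \<cdot>\<^sub>v y) = c * cip n x y"
  unfolding cip_def by (simp add: sum_distrib_left mult_ac)

lemma star_value:
  "Re (tr (bell_diag p * mat_fun ln (bell_diag r))) = (\<Sum>i\<in>{1..4}. p i * ln (r i))"
proof -
  obtain U lam where U: "unitary 4 U"
    "bell_diag r = U * mat_diag 4 (\<lambda>i. complex_of_real (lam i)) * adj U"
    "mat_fun ln (bell_diag r) = U * mat_diag 4 (\<lambda>i. complex_of_real (ln (lam i))) * adj U"
    using mat_fun_spec[OF bd_herm, of r ln] by auto
  have Mc: "mat_fun ln (bell_diag r) \<in> carrier_mat 4 4" using mat_fun_carrier[OF bd_herm, of ln r] by simp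
  have "cip 4 (bv i) (mat_fun ln (bell_diag r) *\<^sub>v bv i) = complex_of_real (ln (r i))" if i: "i \<in> {1..4}" for i
    unfolding U(3)
    by (rule cip_eigen[OF U(1) U(2) bv_carrier bd_eig[OF i]]) (use cip_bv_bv[OF i i] in simp)
  hence "tr (bell_diag p * mat_fun ln (bell_diag r)) = (\<Sum>i\<in>{1..4}. complex_of_real (p i) * complex_of_real (ln (r i)))"
    unfolding bd_tr[OF Mc] by (intro sum.cong) auto
  thus ?thesis by (simp add: Re_sum)
qed

lemma eig_col:
  assumes U: "unitary n U" and S: "S = U * mat_diag n (\<lambda>i. complex_of_real (lam i)) * adj U" and j: "j < n"
  shows "S *\<^sub>v col U j = complex_of_real (lam j) \<cdot>\<^sub>v col U j"
proof -
  have Uc: "U \<in> carrier_mat n n" using unitary_carrier[OF U] .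
  have UU: "adj U * U = 1\<^sub>m n" using U unfolding unitary_def by auto
  let ?D = "mat_diag n (\<lambda>i. complex_of_real (lam i))"
  have Sc: "S \<in> carrier_mat n n" using Uc S by simp
  have "S * U = U * ?D * (adj U * U)" using Uc by (simp add: S mm_assoc[where n=n])
  also have "\<dots> = U * ?D" using UU Uc by simp
  finally have SU: "S * U = U * ?D" .
  have "S *\<^sub>v col U j = col (S * U) j" using col_mult2[OF Sc Uc j] by simp
  also have "\<dots> = col (U * ?D) j" by (simp add: SU)
  also have "\<dots> = U *\<^sub>v col ?D j" using col_mult2[OF Uc mat_diag_dim j] .
  also have "col ?D j = complex_of_real (lam j) \<cdot>\<^sub>v unit_vec n j"
    by (rule eq_vecI) (use j in \<open>auto simp: mat_diag_def\<close>)
  also have "U *\<^sub>v (complex_of_real (lam j) \<cdot>\<^sub>v unit_vec n j) = complex_of_real (lam j) \<cdot>\<^sub>v col U j"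
    using Uc j by (simp add: mult_mat_vec mult_unit_vec)
  finally show ?thesis .
qed

lemma col_norm:
  assumes U: "unitary n U" and j: "j < n"
  shows "cip n (col U j) (col U j) = 1"
proof -
  have Uc: "U \<in> carrier_mat n n" using unitary_carrier[OF U] .
  have UU: "adj U * U = 1\<^sub>m n" using U unfolding unitary_def by auto
  have "(adj U * U) $$ (j,j) = (\<Sum>a<n. cnj (U $$ (a,j)) * U $$ (a,j))"
    using mult_entry[OF adj_carrier[OF Uc] Uc j j] Uc j by simp
  also have "\<dots> = cip n (col U j) (col U j)" unfolding cip_def using Uc j by simp
  finally show ?thesis using UU j by simp
qed

lemma w_entry:
  assumes Uc: "U \<in> carrier_mat n n" and x: "x \<in> carrier_vec n" and j: "j < n"
  shows "(adj U *\<^sub>v x) $ j = cnj (cip n x (col U j))"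
proof -
  have "(adj U *\<^sub>v x) $ j = (\<Sum>a<n. cnj (U $$ (a,j)) * x $ a)"
    using mult_vec_entry[OF adj_carrier[OF Uc] x j] Uc j by simp
  also have "\<dots> = cnj (cip n x (col U j))" unfolding cip_def using Uc j by (simp add: mult.commute)
  finally show ?thesis .
qed

lemma Re_ofreal_cnj: "Re (complex_of_real a * (cnj z * z)) = a * (cmod z)\<^sup>2"
  by (subst cnj_mult_self) (simp only: Re_complex_of_real of_real_mult[symmetric])

lemma vec_bound:
  assumes U: "unitary n U" and S: "S = U * mat_diag n (\<lambda>i. complex_of_real (lam i)) * adj U"
    and M: "M = U * mat_diag n (\<lambda>i. complex_of_real (ln (lam i))) * adj U"
    and x: "x \<in> carrier_vec n" and nx: "cip n x x = 1"
    and lam0: "\<forall>j<n. 0 \<le> lam j" and ker: "\<forall>j<n. lam j = 0 \<longrightarrow> (adj U *\<^sub>v x) $ j = 0"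
    and r: "r > 0"
  shows "Re (cip n x (M *\<^sub>v x)) \<le> ln r + Re (cip n x (S *\<^sub>v x)) / r - 1"
proof -
  have Uc: "U \<in> carrier_mat n n" using unitary_carrier[OF U] .
  define w where "w = adj U *\<^sub>v x"
  define nw where "nw = (\<lambda>j. (cmod (w $ j))\<^sup>2)"
  have nw0: "0 \<le> nw j" for j by (simp add: nw_def)
  have reM: "Re (cip n x (M *\<^sub>v x)) = (\<Sum>j<n. ln (lam j) * nw j)"
    unfolding M cip_diag[OF Uc x] w_def[symmetric] by (simp only: Re_sum nw_def Re_ofreal_cnj)
  have reS: "Re (cip n x (S *\<^sub>v x)) = (\<Sum>j<n. lam j * nw j)"
    unfolding S cip_diag[OF Uc x] w_def[symmetric] by (simp only: Re_sum nw_def Re_ofreal_cnj)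
  have sn: "(\<Sum>j<n. nw j) = 1"
  proof -
    have "cip n w w = 1" using cip_unitary[OF U x] nx by (simp add: w_def)
    hence "Re (cip n w w) = 1" by simp
    thus ?thesis unfolding cip_def by (simp only: Re_sum nw_def Re_cnj_mult_self)
  qed
  have "(\<Sum>j<n. ln (lam j) * nw j) \<le> (\<Sum>j<n. (ln r + lam j / r - 1) * nw j)"
  proof (rule sum_mono)
    fix j assume "j \<in> {..<n}"
    hence j: "j < n" by simp
    show "ln (lam j) * nw j \<le> (ln r + lam j / r - 1) * nw j"
    proof (cases "w $ j = 0")
      case True thus ?thesis by (simp add: nw_def)
    next
      case False
      hence "lam j \<noteq> 0" using ker j by (auto simp: w_def)
      hence lp: "lam j > 0" using lam0 j by (simp add: order_less_le)
      have "ln (lam j / r) \<le> lam j / r - 1" by (rule ln_le_minus_one) (use lp r in simp)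
      hence "ln (lam j) \<le> ln r + lam j / r - 1" using lp r by (simp add: ln_div)
      thus ?thesis by (rule mult_right_mono) (rule nw0)
    qed
  qed
  also have "\<dots> = (\<Sum>j<n. (ln r - 1) * nw j + (lam j * nw j) / r)"
    by (rule sum.cong[OF refl]) (simp add: algebra_simps)
  also have "\<dots> = (ln r - 1) * (\<Sum>j<n. nw j) + (\<Sum>j<n. lam j * nw j) / r"
    by (simp only: sum.distrib sum_distrib_left sum_divide_distrib)
  also have "\<dots> = ln r + Re (cip n x (S *\<^sub>v x)) / r - 1" unfolding sn reS by simp
  finally show ?thesis unfolding reM .
qed

lemma dens_pr2:
  assumes n: "(cmod (u 0))\<^sup>2 + (cmod (u 1))\<^sup>2 = 1"
  shows "density 2 (mat 2 2 (\<lambda>(i,j). u i * cnj (u j)))"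
  unfolding density_def psd_def hermitian_def
proof (intro conjI allI)
  let ?M = "mat 2 2 (\<lambda>(i,j). u i * cnj (u j))"
  show "?M \<in> carrier_mat 2 2" by simp
  show "dim_row ?M = dim_col ?M" by simp
  show "adj ?M = ?M" by (rule eq_matI) (auto simp: adj_def)
  fix v :: "nat \<Rightarrow> complex"
  define c where "c = v 0 * cnj (u 0) + v 1 * cnj (u 1)"
  have "(\<Sum>i<2. \<Sum>j<2. cnj (v i) * ?M $$ (i,j) * v j) = cnj c * c"
    unfolding lessThan2 c_def by (simp add: algebra_simps)
  thus "0 \<le> Re (\<Sum>i<2. \<Sum>j<2. cnj (v i) * ?M $$ (i,j) * v j)" by (simp add: Re_cnj_mult_self)
next
  let ?M = "mat 2 2 (\<lambda>(i,j). u i * cnj (u j))"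
  have "tr ?M = u 0 * cnj (u 0) + u 1 * cnj (u 1)" unfolding tr_def by (simp add: lessThan2)
  also have "\<dots> = complex_of_real ((cmod (u 0))\<^sup>2 + (cmod (u 1))\<^sup>2)"
    by (simp only: of_real_add complex_norm_square)
  also have "\<dots> = 1" by (simp only: n of_real_1)
  finally show "tr ?M = 1" .
qed

lemma cmod_s2: "(cmod s2)\<^sup>2 = 1/2"
  unfolding s2_def by (simp add: norm_divide power_divide)

lemma s2_sq': "s2 * (s2 * x) = x / 2"
  by (simp add: mult.assoc[symmetric] s2_sq)

definition Pxp :: "complex mat" where "Pxp = mat 2 2 (\<lambda>(i,j). 1/2)"
definition Pxm :: "complex mat" where "Pxm = mat 2 2 (\<lambda>(i,j). if i = j then 1/2 else -1/2)"
definition Pyp :: "complex mat" where "Pyp = mat 2 2 (\<lambda>(i,j). if i = j then 1/2 else if i = 0 then -\<i>/2 else \<i>/2)"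
definition Pym :: "complex mat" where "Pym = mat 2 2 (\<lambda>(i,j). if i = j then 1/2 else if i = 0 then \<i>/2 else -\<i>/2)"
definition Pzp :: "complex mat" where "Pzp = mat 2 2 (\<lambda>(i,j). if i = 0 \<and> j = 0 then 1 else 0)"
definition Pzm :: "complex mat" where "Pzm = mat 2 2 (\<lambda>(i,j). if i = 1 \<and> j = 1 then 1 else 0)"

lemma lt2: "(a::nat) < 2 \<longleftrightarrow> a = 0 \<or> a = 1" by auto

lemma dens_P: "density 2 Pxp" "density 2 Pxm" "density 2 Pyp" "density 2 Pym" "density 2 Pzp" "density 2 Pzm"
proof -
  have "Pxp = mat 2 2 (\<lambda>(i,j). (\<lambda>i. s2) i * cnj ((\<lambda>i. s2) j))"
    by (rule eq_matI) (auto simp: Pxp_def s2_sq)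
  thus "density 2 Pxp" using dens_pr2[of "\<lambda>i. s2"] by (simp add: cmod_s2)
  have "Pxm = mat 2 2 (\<lambda>(i,j). (\<lambda>i. if i = 0 then s2 else - s2) i * cnj ((\<lambda>i. if i = 0 then s2 else - s2) j))"
    by (rule eq_matI) (auto simp: Pxm_def s2_sq s2_sq' lt2)
  thus "density 2 Pxm" using dens_pr2[of "\<lambda>i. if i = 0 then s2 else - s2"] by (simp add: cmod_s2)
  have "Pyp = mat 2 2 (\<lambda>(i,j). (\<lambda>i. if i = 0 then s2 else \<i> * s2) i * cnj ((\<lambda>i. if i = 0 then s2 else \<i> * s2) j))"
    by (rule eq_matI) (auto simp: Pyp_def s2_sq s2_sq' lt2 algebra_simps)
  thus "density 2 Pyp" using dens_pr2[of "\<lambda>i. if i = 0 then s2 else \<i> * s2"] by (simp add: cmod_s2 norm_mult)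
  have "Pym = mat 2 2 (\<lambda>(i,j). (\<lambda>i. if i = 0 then s2 else - \<i> * s2) i * cnj ((\<lambda>i. if i = 0 then s2 else - \<i> * s2) j))"
    by (rule eq_matI) (auto simp: Pym_def s2_sq s2_sq' lt2 algebra_simps)
  thus "density 2 Pym" using dens_pr2[of "\<lambda>i. if i = 0 then s2 else - \<i> * s2"] by (simp add: cmod_s2 norm_mult)
  have "Pzp = mat 2 2 (\<lambda>(i,j). (\<lambda>i. if i = 0 then 1 else 0) i * cnj ((\<lambda>i. if i = 0 then 1 else 0) j))"
    by (rule eq_matI) (auto simp: Pzp_def)
  thus "density 2 Pzp" using dens_pr2[of "\<lambda>i. if i = 0 then 1 else 0"] by simp
  have "Pzm = mat 2 2 (\<lambda>(i,j). (\<lambda>i. if i = 1 then 1 else 0) i * cnj ((\<lambda>i. if i = 1 then 1 else 0) j))"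
    by (rule eq_matI) (auto simp: Pzm_def)
  thus "density 2 Pzm" using dens_pr2[of "\<lambda>i. if i = 1 then 1 else 0"] by simp
qed

lemma P_carrier[simp]: "Pxp \<in> carrier_mat 2 2" "Pxm \<in> carrier_mat 2 2" "Pyp \<in> carrier_mat 2 2"
  "Pym \<in> carrier_mat 2 2" "Pzp \<in> carrier_mat 2 2" "Pzm \<in> carrier_mat 2 2"
  by (simp_all add: Pxp_def Pxm_def Pyp_def Pym_def Pzp_def Pzm_def)

lemma lessThan6: "{..<6::nat} = {0,1,2,3,4,5}" by auto
lemma lt6: "(i::nat) < 6 \<longleftrightarrow> i = 0 \<or> i = 1 \<or> i = 2 \<or> i = 3 \<or> i = 4 \<or> i = 5" by auto

lemma P_entries:
  "Pxp $$ (0,0) = 1/2" "Pxp $$ (0,1) = 1/2" "Pxp $$ (1,0) = 1/2" "Pxp $$ (1,1) = 1/2"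
  "Pxm $$ (0,0) = 1/2" "Pxm $$ (0,1) = -1/2" "Pxm $$ (1,0) = -1/2" "Pxm $$ (1,1) = 1/2"
  "Pyp $$ (0,0) = 1/2" "Pyp $$ (0,1) = -\<i>/2" "Pyp $$ (1,0) = \<i>/2" "Pyp $$ (1,1) = 1/2"
  "Pym $$ (0,0) = 1/2" "Pym $$ (0,1) = \<i>/2" "Pym $$ (1,0) = -\<i>/2" "Pym $$ (1,1) = 1/2"
  "Pzp $$ (0,0) = 1" "Pzp $$ (0,1) = 0" "Pzp $$ (1,0) = 0" "Pzp $$ (1,1) = 0"
  "Pzm $$ (0,0) = 0" "Pzm $$ (0,1) = 0" "Pzm $$ (1,0) = 0" "Pzm $$ (1,1) = 1"
  by (simp_all add: Pxp_def Pxm_def Pyp_def Pym_def Pzp_def Pzm_def)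

lemma sep_star:
  fixes w1 w2 :: real
  assumes w1: "0 \<le> w1" and w2: "0 \<le> w2" and w12: "w1 + w2 \<le> 1/2"
  shows "separable (bell_diag (\<lambda>i. if i = 4 then 1/2 else if i = 1 then w1 else if i = 2 then w2 else 1/2 - w1 - w2))"
proof -
  define f where "f = (\<lambda>i::nat. if i = 4 then 1/2 else if i = 1 then w1 else if i = 2 then w2 else 1/2 - w1 - w2)"
  define q :: "nat \<Rightarrow> real" where "q = (\<lambda>i. if i < 2 then w1 else if i < 4 then w2 else 1/2 - w1 - w2)"
  define A where "A = (\<lambda>i. [Pyp, Pym, Pxp, Pxm, Pzp, Pzm] ! i)"
  define B where "B = (\<lambda>i. [Pym, Pyp, Pxm, Pxp, Pzm, Pzp] ! i)"
  have c1: "\<forall>i<6. 0 \<le> q i \<and> density 2 (A i) \<and> density 2 (B i)"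
    unfolding lt6 using w1 w2 w12 dens_P by (auto simp: q_def A_def B_def)
  have c2: "(\<Sum>i<6. q i) = 1" unfolding lessThan6 by (simp add: q_def)
  have c3: "bell_diag f = mat 4 4 (\<lambda>(a,b). \<Sum>i<6. complex_of_real (q i) * kron (A i) (B i) $$ (a,b))"
  proof (rule eq_matI)
    fix a b assume "a < dim_row (mat 4 4 (\<lambda>(a,b). \<Sum>i<6. complex_of_real (q i) * kron (A i) (B i) $$ (a,b)))"
      "b < dim_col (mat 4 4 (\<lambda>(a,b). \<Sum>i<6. complex_of_real (q i) * kron (A i) (B i) $$ (a,b)))"
    hence a: "a < 4" and b: "b < 4" by auto
    have "mat 4 4 (\<lambda>(a,b). \<Sum>i<6. complex_of_real (q i) * kron (A i) (B i) $$ (a,b)) $$ (a,b) =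
      complex_of_real w1 * (kron Pyp Pym $$ (a,b) + kron Pym Pyp $$ (a,b))
      + complex_of_real w2 * (kron Pxp Pxm $$ (a,b) + kron Pxm Pxp $$ (a,b))
      + complex_of_real (1/2 - w1 - w2) * (kron Pzp Pzm $$ (a,b) + kron Pzm Pzp $$ (a,b))"
      using a b unfolding lessThan6 by (simp add: q_def A_def B_def algebra_simps)
    also have "\<dots> = bell_diag f $$ (a,b)"
      unfolding bd_entry[OF a b] oneto4
      using a b unfolding lt4
      by (elim disjE) (simp_all add: kron_entry f_def bell_vals P_entries P_entries[unfolded One_nat_def] s2_sq s2_sq' algebra_simps)
    finally show "bell_diag f $$ (a,b) = mat 4 4 (\<lambda>(a,b). \<Sum>i<6. complex_of_real (q i) * kron (A i) (B i) $$ (a,b)) $$ (a,b)" by simp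
  qed auto
  show ?thesis unfolding separable_def f_def[symmetric]
    using c1 c2 c3 by blast
qed

lemma sep_bound:
  assumes sep: "separable S"
    and supp: "\<forall>v\<in>carrier_vec (dim_col S). S *\<^sub>v v = 0\<^sub>v (dim_row S) \<longrightarrow>
                 bell_diag p *\<^sub>v v = 0\<^sub>v (dim_row (bell_diag p))"
    and hp: "\<forall>i\<in>{1..4}. 0 \<le> p i" and hr: "\<forall>i\<in>{1..4}. 0 < p i \<longrightarrow> 0 < r i"
  shows "Re (tr (bell_diag p * mat_fun ln S)) \<le> (\<Sum>i\<in>{1..4}. p i * ln (r i) +
     (if 0 < p i then p i * Re (cip 4 (bv i) (S *\<^sub>v bv i)) / r i - p i else 0))"
proof -
  note SP = sep_props[OF sep]
  have Sc: "S \<in> carrier_mat 4 4" using SP(1) .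
  have dS: "dim_row S = 4" "dim_col S = 4" using Sc by auto
  obtain U lam where U0: "unitary (dim_row S) U \<and>
    S = U * mat_diag (dim_row S) (\<lambda>i. complex_of_real (lam i)) * adj U \<and>
    mat_fun ln S = U * mat_diag (dim_row S) (\<lambda>i. complex_of_real (ln (lam i))) * adj U"
    using mat_fun_spec[OF SP(2), of ln] by (elim exE) (erule that)
  note U = conjunct1[OF U0, unfolded dS(1)] conjunct1[OF conjunct2[OF U0], unfolded dS(1)]
    conjunct2[OF conjunct2[OF U0], unfolded dS(1)]
  have Uc: "U \<in> carrier_mat 4 4" using unitary_carrier[OF U(1)] .
  have Mc: "mat_fun ln S \<in> carrier_mat 4 4" using mat_fun_carrier[OF SP(2), of ln] dS by simp
  have dU: "dim_row U = 4" using Uc by (rule carrier_matD)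
  have colc: "col U j \<in> carrier_vec 4" for j using col_dim[of U j] unfolding dU .
  have lamc: "cip 4 (col U j) (S *\<^sub>v col U j) = complex_of_real (lam j)" if j: "j < 4" for j
    unfolding eig_col[OF U(1) U(2) j] cip_smult[OF colc] col_norm[OF U(1) j] by simp
  have lam0: "\<forall>j<4. 0 \<le> lam j"
  proof (intro allI impI)
    fix j :: nat assume j: "j < 4"
    have "0 \<le> Re (cip 4 (col U j) (S *\<^sub>v col U j))" using SP(3) colc by blast
    thus "0 \<le> lam j" unfolding lamc[OF j] by simp
  qed
  have ker: "\<forall>j<4. lam j = 0 \<longrightarrow> (adj U *\<^sub>v bv i) $ j = 0" if i: "i \<in> {1..4}" and pi: "0 < p i" for i
  proof (intro allI impI)
    fix j :: nat assume j: "j < 4" and l: "lam j = 0"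
    have dcol: "dim_vec (col U j) = 4" using colc[of j] by (rule carrier_vecD)
    have "S *\<^sub>v col U j = 0\<^sub>v 4" unfolding eig_col[OF U(1) U(2) j] l
      by (rule eq_vecI) (simp_all add: dcol dU)
    hence zS: "S *\<^sub>v col U j = 0\<^sub>v (dim_row S)" using dS by simp
    have cU: "col U j \<in> carrier_vec (dim_col S)" using colc dS by simp
    have "bell_diag p *\<^sub>v col U j = 0\<^sub>v (dim_row (bell_diag p))"
      by (rule supp[rule_format, OF cU zS])
    hence "bell_diag p *\<^sub>v col U j = 0\<^sub>v 4" by simp
    hence "\<forall>i\<in>{1..4}. complex_of_real (p i) * cip 4 (bv i) (col U j) = 0"
      by (rule bd_ker[OF colc, THEN iffD1])
    hence "complex_of_real (p i) * cip 4 (bv i) (col U j) = 0" using i by blast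
    hence "cip 4 (bv i) (col U j) = 0" using pi by simp
    thus "(adj U *\<^sub>v bv i) $ j = 0" using w_entry[OF Uc bv_carrier j] by simp
  qed
  have "Re (tr (bell_diag p * mat_fun ln S)) = (\<Sum>i\<in>{1..4}. p i * Re (cip 4 (bv i) (mat_fun ln S *\<^sub>v bv i)))"
    unfolding bd_tr[OF Mc] by (simp add: Re_sum)
  also have "\<dots> \<le> (\<Sum>i\<in>{1..4}. p i * ln (r i) +
     (if 0 < p i then p i * Re (cip 4 (bv i) (S *\<^sub>v bv i)) / r i - p i else 0))"
  proof (rule sum_mono)
    fix i :: nat assume i: "i \<in> {1..4}"
    show "p i * Re (cip 4 (bv i) (mat_fun ln S *\<^sub>v bv i)) \<le> p i * ln (r i) +
     (if 0 < p i then p i * Re (cip 4 (bv i) (S *\<^sub>v bv i)) / r i - p i else 0)"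
    proof (cases "0 < p i")
      case True
      have ri: "0 < r i" using hr i True by blast
      have "Re (cip 4 (bv i) (mat_fun ln S *\<^sub>v bv i)) \<le> ln (r i) + Re (cip 4 (bv i) (S *\<^sub>v bv i)) / r i - 1"
        by (rule vec_bound[OF U(1) U(2) U(3) bv_carrier cip_bv_bv[OF i i, simplified] lam0 ker[OF i True] ri])
      hence "p i * Re (cip 4 (bv i) (mat_fun ln S *\<^sub>v bv i)) \<le> p i * (ln (r i) + Re (cip 4 (bv i) (S *\<^sub>v bv i)) / r i - 1)"
        using True by (intro mult_left_mono) auto
      thus ?thesis using True by (simp add: algebra_simps)
    next
      case False
      have "0 \<le> p i" using hp i by auto
      hence "p i = 0" using False by linarith
      thus ?thesis by simp
    qed
  qed
  finally show ?thesis .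
qed

lemma arith_final:
  fixes p q :: "nat \<Rightarrow> real"
  assumes hp: "\<forall>i\<in>{1..4}. 0 \<le> p i" and sp: "(\<Sum>i\<in>{1..4}. p i) = 1"
    and p4: "p 4 > 1/2" "p 4 < 1"
    and hq: "\<forall>i\<in>{1..4}. 0 \<le> q i" and sq: "(\<Sum>i\<in>{1..4}. q i) = 1" and q4: "q 4 \<le> 1/2"
  shows "(\<Sum>i\<in>{1..4}. (if 0 < p i then p i * q i / (if i = 4 then 1/2 else p i / (2 * (1 - p 4))) - p i else 0)) \<le> 0"
proof -
  define s where "s = 1 - p 4"
  have s0: "s > 0" using p4 by (simp add: s_def)
  define T where "T = (\<lambda>i. (if 0 < p i then p i * q i / (if i = 4 then 1/2 else p i / (2 * (1 - p 4))) - p i else 0))"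
  have Ti: "T i \<le> 2 * s * q i - p i" if i: "i \<in> {1,2,3}" for i
  proof (cases "0 < p i")
    case True
    have "i \<noteq> 4" using i by auto
    hence "T i = p i * q i / (p i / (2 * s)) - p i" using True by (simp add: T_def s_def)
    also have "\<dots> = 2 * s * q i - p i" using True s0 by (simp add: field_simps)
    finally show ?thesis by simp
  next
    case False
    have "0 \<le> p i" using hp i by auto
    hence "p i = 0" using False by linarith
    moreover have "0 \<le> q i" using hq i by auto
    ultimately show ?thesis using False s0 by (simp add: T_def)
  qed
  have T4: "T 4 = 2 * p 4 * q 4 - p 4" using p4 by (simp add: T_def)
  have sumT: "(\<Sum>i\<in>{1..4}. T i) = T 1 + T 2 + T 3 + T 4" unfolding oneto4 by simp
  have sp': "p 1 + p 2 + p 3 + p 4 = 1" using sp unfolding oneto4 by simp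
  have sq': "q 1 + q 2 + q 3 + q 4 = 1" using sq unfolding oneto4 by simp
  have "(p 4 - s) * (2 * q 4 - 1) \<le> 0"
    by (rule mult_nonneg_nonpos) (use p4 q4 in \<open>auto simp: s_def\<close>)
  hence key: "s - p 4 + 2 * q 4 * (p 4 - s) \<le> 0" by (simp add: algebra_simps)
  have "T 1 + T 2 + T 3 + T 4 \<le> (2 * s * q 1 - p 1) + (2 * s * q 2 - p 2) + (2 * s * q 3 - p 3) + (2 * p 4 * q 4 - p 4)"
    using Ti[of 1] Ti[of 2] Ti[of 3] T4 by simp
  also have "\<dots> = 2 * s * (q 1 + q 2 + q 3) - (p 1 + p 2 + p 3) + 2 * p 4 * q 4 - p 4" by (simp add: algebra_simps)
  also have "\<dots> = 2 * s * (1 - q 4) - s + 2 * p 4 * q 4 - p 4"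
  proof -
    have "q 1 + q 2 + q 3 = 1 - q 4" "p 1 + p 2 + p 3 = s" using sp' sq' by (simp_all add: s_def)
    thus ?thesis by simp
  qed
  also have "\<dots> = s - p 4 + 2 * q 4 * (p 4 - s)" by (simp add: algebra_simps)
  also have "\<dots> \<le> 0" using key .
  finally show ?thesis unfolding T_def[symmetric] sumT .
qed

theorem mainTheorem3:
  fixes p :: "nat \<Rightarrow> real"
  assumes nonneg: "\<forall>i\<in>{1..4}. 0 \<le> p i"
    and sum1: "(\<Sum>i\<in>{1..4}. p i) = 1"
    and p4_gt: "p 4 > 1/2"
    and p4_lt: "p 4 < 1"
  shows "separable (bell_diag (\<lambda>i. if i = 4 then 1/2 else p i / (2 * (1 - p 4)))) \<and>
    (\<forall>\<sigma>. separable \<sigma> \<longrightarrow>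
       rel_entropy (bell_diag p) (bell_diag (\<lambda>i. if i = 4 then 1/2 else p i / (2 * (1 - p 4))))
       \<le> rel_entropy (bell_diag p) \<sigma>)"
proof -
  define r where "r = (\<lambda>i::nat. if i = 4 then 1/2 else p i / (2 * (1 - p 4)))"
  define s where "s = 1 - p 4"
  have s0: "s > 0" using p4_lt by (simp add: s_def)
  have sp': "p 1 + p 2 + p 3 + p 4 = 1" using sum1 unfolding oneto4 by simp
  have p123: "0 \<le> p 1" "0 \<le> p 2" "0 \<le> p 3" using nonneg by auto
  have sepr: "separable (bell_diag r)"
  proof -
    define f where "f = (\<lambda>i::nat. if i = 4 then 1/2 else if i = 1 then r 1 else if i = 2 then r 2 else 1/2 - r 1 - r 2)"
    have r3: "r 3 = 1/2 - r 1 - r 2"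
    proof -
      have "r 1 + r 2 + r 3 = (p 1 + p 2 + p 3) / (2 * s)" by (simp add: r_def s_def add_divide_distrib)
      also have "\<dots> = 1/2" using sp' s0 by (simp add: s_def field_simps)
      finally show ?thesis by simp
    qed
    have r4: "r 4 = 1/2" by (simp add: r_def)
    have rf: "r i = f i" if "i \<in> {1..4}" for i
    proof -
      have "i = 1 \<or> i = 2 \<or> i = 3 \<or> i = 4" using that by auto
      thus ?thesis using r3 r4 unfolding f_def by auto
    qed
    have eqf: "bell_diag r = bell_diag f"
      unfolding bell_diag_def by (intro eq_matI) (auto intro!: sum.cong simp: rf)
    have r1: "0 \<le> r 1" and r2: "0 \<le> r 2" using p123 s0 by (simp_all add: r_def s_def[symmetric])
    have "r 1 + r 2 \<le> 1/2"
    proof -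
      have "r 1 + r 2 = (p 1 + p 2) / (2 * s)" by (simp add: r_def s_def add_divide_distrib)
      also have "\<dots> \<le> (p 1 + p 2 + p 3) / (2 * s)" using p123 s0 by (intro divide_right_mono) auto
      also have "\<dots> = 1/2" using sp' s0 by (simp add: s_def field_simps)
      finally show ?thesis .
    qed
    thus ?thesis unfolding eqf f_def using sep_star[OF r1 r2] by simp
  qed
  have rpos: "\<forall>i\<in>{1..4}. 0 < p i \<longrightarrow> 0 < r i" using s0 by (auto simp: r_def s_def)
  have suppr: "\<forall>v\<in>carrier_vec (dim_col (bell_diag r)). bell_diag r *\<^sub>v v = 0\<^sub>v (dim_row (bell_diag r)) \<longrightarrow>
                 bell_diag p *\<^sub>v v = 0\<^sub>v (dim_row (bell_diag p))"
  proof (intro ballI impI)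
    fix v assume v: "v \<in> carrier_vec (dim_col (bell_diag r))" and z: "bell_diag r *\<^sub>v v = 0\<^sub>v (dim_row (bell_diag r))"
    have v4: "v \<in> carrier_vec 4" using v by simp
    have z4: "bell_diag r *\<^sub>v v = 0\<^sub>v 4" using z by simp
    have hr: "\<forall>i\<in>{1..4}. complex_of_real (r i) * cip 4 (bv i) v = 0" by (rule bd_ker[OF v4, THEN iffD1, OF z4])
    have "\<forall>i\<in>{1..4}. complex_of_real (p i) * cip 4 (bv i) v = 0"
    proof
      fix i :: nat assume i: "i \<in> {1..4}"
      show "complex_of_real (p i) * cip 4 (bv i) v = 0"
      proof (cases "p i = 0")
        case False
        hence "0 < p i" using nonneg i by (simp add: order_less_le)
        hence "r i \<noteq> 0" using rpos i by force
        moreover have "complex_of_real (r i) * cip 4 (bv i) v = 0" using hr i by blast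
        ultimately have "cip 4 (bv i) v = 0" by simp
        thus ?thesis by simp
      qed simp
    qed
    hence "bell_diag p *\<^sub>v v = 0\<^sub>v 4" by (rule bd_ker[OF v4, THEN iffD2])
    thus "bell_diag p *\<^sub>v v = 0\<^sub>v (dim_row (bell_diag p))" by simp
  qed
  define L where "L = mat_fun ln (bell_diag p)"
  have Lc: "L \<in> carrier_mat 4 4" using mat_fun_carrier[OF bd_herm, of ln p] by (simp add: L_def)
  have Mrc: "mat_fun ln (bell_diag r) \<in> carrier_mat 4 4" using mat_fun_carrier[OF bd_herm, of ln r] by simp
  have lhs: "rel_entropy (bell_diag p) (bell_diag r) =
      ereal (Re (tr (bell_diag p * L)) - (\<Sum>i\<in>{1..4}. p i * ln (r i)))"
    unfolding rel_entropy_def using suppr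
    by (simp add: L_def[symmetric] re_tr_split[OF Lc Mrc] star_value)
  have main: "rel_entropy (bell_diag p) (bell_diag r) \<le> rel_entropy (bell_diag p) S" if sep: "separable S" for S
  proof (cases "\<forall>v\<in>carrier_vec (dim_col S). S *\<^sub>v v = 0\<^sub>v (dim_row S) \<longrightarrow>
                 bell_diag p *\<^sub>v v = 0\<^sub>v (dim_row (bell_diag p))")
    case False
    have "rel_entropy (bell_diag p) S = \<infinity>" unfolding rel_entropy_def by (simp only: False if_False)
    thus ?thesis by simp
  next
    case True
    note SP = sep_props[OF sep]
    have Sc: "S \<in> carrier_mat 4 4" using SP(1) .
    have Mc: "mat_fun ln S \<in> carrier_mat 4 4" using mat_fun_carrier[OF SP(2), of ln] Sc by simp
    define q where "q = (\<lambda>i. Re (cip 4 (bv i) (S *\<^sub>v bv i)))"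
    have hq: "\<forall>i\<in>{1..4}. 0 \<le> q i" using SP(3) by (simp add: q_def)
    have sq: "(\<Sum>i\<in>{1..4}. q i) = 1"
    proof -
      have "(\<Sum>i\<in>{1..4}. q i) = Re (\<Sum>i\<in>{1..4}. cip 4 (bv i) (S *\<^sub>v bv i))" by (simp add: q_def Re_sum)
      also have "\<dots> = 1" unfolding bv_tr[OF Sc] SP(4) by simp
      finally show ?thesis .
    qed
    have q4: "q 4 \<le> 1/2" using SP(5) by (simp add: q_def)
    have "Re (tr (bell_diag p * mat_fun ln S)) \<le> (\<Sum>i\<in>{1..4}. p i * ln (r i) +
       (if 0 < p i then p i * q i / r i - p i else 0))"
      unfolding q_def by (rule sep_bound[OF sep True nonneg rpos])
    also have "\<dots> = (\<Sum>i\<in>{1..4}. p i * ln (r i)) + (\<Sum>i\<in>{1..4}. (if 0 < p i then p i * q i / r i - p i else 0))"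
      by (rule sum.distrib)
    also have "\<dots> \<le> (\<Sum>i\<in>{1..4}. p i * ln (r i))"
      using arith_final[OF nonneg sum1 p4_gt p4_lt hq sq q4] unfolding r_def by simp
    finally have bound: "Re (tr (bell_diag p * mat_fun ln S)) \<le> (\<Sum>i\<in>{1..4}. p i * ln (r i))" .
    have rhs: "rel_entropy (bell_diag p) S = ereal (Re (tr (bell_diag p * L)) - Re (tr (bell_diag p * mat_fun ln S)))"
      unfolding rel_entropy_def using True
      by (simp add: L_def[symmetric] re_tr_split[OF Lc Mc])
    show ?thesis unfolding lhs rhs using bound by simp
  qed
  show ?thesis using sepr main unfolding r_def by blast
qed

end
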